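(* (i) Let $\Lambda:\mathbb{R}\to(0,1]$ be decreasing. Then $\mathrm{ES}_\Lambda$ is quasi-convex, law invariant, satisfies $\mathrm{ES}_\Lambda\ge\mathrm{VaR}_\Lambda$ on $L^\infty$, and every quasi-convex, law-invariant $\rho:L^\infty\to\overline{\mathbb{R}}$ with $\rho\ge\mathrm{VaR}_\Lambda$ on $L^\infty$ satisfies $\rho\ge\mathrm{ES}_\Lambda$; i.e. $\mathrm{ES}_\Lambda=\min\{\rho:L^\infty\to\overline{\mathbb{R}}\mid\rho\ge\mathrm{VaR}_\Lambda\text{ and }\rho\text{ is quasi-convex and law invariant}\}$. (ii) Let $\Lambda:\mathbb{R}\to[0,1)$ be decreasing. Then $\mathrm{ES}_\Lambda=\min\{\rho:L^\infty\to\overline{\mathbb{R}}\mid\rho\ge\mathrm{VaR}^+_\Lambda\text{ and }\rho\text{ is quasi-convex and law invariant}\}$ in the same sense. Moreover, for every decreasing $\Lambda:\mathbb{R}\to[0,1]$, $$\mathrm{ES}_\Lambda(X)=\inf_{x\in\mathbb{R}}\left(\mathrm{ES}_{\Lambda(x)}(X)\vee x\right),\quad X\in L^\infty.$$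
   Context: $(\Omega,\mathcal F,\mathbb P)$ is an atomless probability space, $L^0$ the set of all random variables, $L^\infty$ the essentially bounded ones, $\overline{\mathbb{R}}=[-\infty,\infty]$; "decreasing" is in the weak sense; $\wedge=\min$, $\vee=\max$. For $\alpha\in[0,1]$, $X\in L^0$: $\mathrm{VaR}_\alpha(X)=\inf\{x\in\mathbb{R}:\mathbb P(X\le x)\ge\alpha\}$, $\mathrm{VaR}^+_\alpha(X)=\inf\{x\in\mathbb{R}:\mathbb P(X\le x)>\alpha\}$ ($\inf\mathbb{R}=-\infty$, $\inf\emptyset=\infty$). For $X\in L^\infty$: $\mathrm{ES}_\alpha(X)=\frac{1}{1-\alpha}\int_\alpha^1\mathrm{VaR}_\beta(X)\,\mathrm d\beta$ for $\alpha<1$, $\mathrm{ES}_1(X)=\mathrm{VaR}_1(X)$. For decreasing $\Lambda:\mathbb{R}\to[0,1]$: $\mathrm{VaR}_\Lambda(X)=\inf\{x\in\mathbb{R}:\mathbb P(X\le x)\ge\Lambda(x)\}$, $\mathrm{VaR}^+_\Lambda(X)=\inf\{x\in\mathbb{R}:\mathbb P(X\le x)>\Lambda(x)\}$, and the $\Lambda$-Expected Shortfall is $\mathrm{ES}_\Lambda(X)=\sup_{x\in\mathbb{R}}\left(\mathrm{ES}_{\Lambda(x)}(X)\wedge x\right)$, $X\in L^\infty$. Quasi-convex: $\rho(\gamma X+(1-\gamma)Y)\le\max\{\rho(X),\rho(Y)\}$ for all $X,Y$, $\gamma\in[0,1]$; law invariant: $\rho(X)=\rho(Y)$ when $X,Y$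 are equally distributed. $\rho\ge\widetilde\rho$ means pointwise on the common domain. *)

theory Defs
  imports "HOL-Probability.Probability"
begin

definition atomless :: "'a measure \<Rightarrow> bool" where
  "atomless M \<longleftrightarrow> (\<forall>A\<in>sets M. 0 < measure M A \<longrightarrow>
      (\<exists>B\<in>sets M. B \<subseteq> A \<and> 0 < measure M B \<and> measure M B < measure M A))"

definition Linf :: "'a measure \<Rightarrow> ('a \<Rightarrow> real) set" where
  "Linf M = {X. X \<in> borel_measurable M \<and> (\<exists>C. AE \<omega> in M. \<bar>X \<omega>\<bar> \<le> C)}"

definition cdf_rv :: "'a measure \<Rightarrow> ('a \<Rightarrow> real) \<Rightarrow> real \<Rightarrow> real" where
  "cdf_rv M X x = measure M {\<omega>\<in>space M. X \<omega> \<le> x}"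

definition VaR :: "'a measure \<Rightarrow> real \<Rightarrow> ('a \<Rightarrow> real) \<Rightarrow> ereal" where
  "VaR M \<alpha> X = Inf {ereal x | x. cdf_rv M X x \<ge> \<alpha>}"

definition VaR_plus :: "'a measure \<Rightarrow> real \<Rightarrow> ('a \<Rightarrow> real) \<Rightarrow> ereal" where
  "VaR_plus M \<alpha> X = Inf {ereal x | x. cdf_rv M X x > \<alpha>}"

definition ES :: "'a measure \<Rightarrow> real \<Rightarrow> ('a \<Rightarrow> real) \<Rightarrow> ereal" where
  "ES M \<alpha> X = (if \<alpha> < 1
     then ereal ((1 / (1 - \<alpha>)) * (LBINT \<beta>:{\<alpha>..1}. real_of_ereal (VaR M \<beta> X)))
     else VaR M 1 X)"

definition VaR_Lambda :: "'a measure \<Rightarrow> (real \<Rightarrow> real) \<Rightarrow> ('a \<Rightarrow> real) \<Rightarrow> ereal" where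
  "VaR_Lambda M \<Lambda> X = Inf {ereal x | x. cdf_rv M X x \<ge> \<Lambda> x}"

definition VaR_Lambda_plus :: "'a measure \<Rightarrow> (real \<Rightarrow> real) \<Rightarrow> ('a \<Rightarrow> real) \<Rightarrow> ereal" where
  "VaR_Lambda_plus M \<Lambda> X = Inf {ereal x | x. cdf_rv M X x > \<Lambda> x}"

definition ES_Lambda :: "'a measure \<Rightarrow> (real \<Rightarrow> real) \<Rightarrow> ('a \<Rightarrow> real) \<Rightarrow> ereal" where
  "ES_Lambda M \<Lambda> X = (SUP x. min (ES M (\<Lambda> x) X) (ereal x))"

definition quasi_convex :: "'a measure \<Rightarrow> (('a \<Rightarrow> real) \<Rightarrow> ereal) \<Rightarrow> bool" where
  "quasi_convex M \<rho> \<longleftrightarrow> (\<forall>X\<in>Linf M. \<forall>Y\<in>Linf M. \<forall>\<gamma>\<in>{0..1::real}.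
      \<rho> (\<lambda>\<omega>. \<gamma> * X \<omega> + (1 - \<gamma>) * Y \<omega>) \<le> max (\<rho> X) (\<rho> Y))"

definition law_invariant :: "'a measure \<Rightarrow> (('a \<Rightarrow> real) \<Rightarrow> ereal) \<Rightarrow> bool" where
  "law_invariant M \<rho> \<longleftrightarrow> (\<forall>X\<in>Linf M. \<forall>Y\<in>Linf M.
      distr M borel X = distr M borel Y \<longrightarrow> \<rho> X = \<rho> Y)"

end

theory Submission
  imports Defs
begin

context prob_space
begin

lemma small_subset_aux:
  assumes al: "atomless M" and A: "A \<in> events" "0 < prob A"
  shows "\<exists>B\<in>events. B \<subseteq> A \<and> 0 < prob B \<and> prob B \<le> prob A / 2^n"
proof (induction n)
  case 0 then show ?case using A by auto
next
  case (Suc n)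
  then obtain B where B: "B \<in> events" "B \<subseteq> A" "0 < prob B" "prob B \<le> prob A / 2^n" by auto
  have "\<exists>B'\<in>events. B' \<subseteq> B \<and> 0 < prob B' \<and> prob B' < prob B"
    using al B(1,3) unfolding atomless_def by simp
  then obtain B' where B': "B' \<in> events" "B' \<subseteq> B" "0 < prob B'" "prob B' < prob B"
    by blast
  have d: "prob (B - B') = prob B - prob B'" using B(1) B'(1,2) by (rule finite_measure_Diff)
  have h: "prob A / 2^Suc n = (prob A / 2^n) / 2" by simp
  have h2: "prob B / 2 \<le> (prob A / 2^n) / 2" using B(4) by (rule divide_right_mono) simp
  show ?case
  proof (cases "prob B' \<le> prob B / 2")
    case True
    then have "prob B' \<le> prob A / 2^Suc n" unfolding h using h2 by linarith
    then show ?thesis using B B' by (intro bexI[of _ B']) auto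
  next
    case False
    then have "prob (B - B') \<le> prob A / 2^Suc n" unfolding h d using h2 False by linarith
    moreover have "0 < prob (B - B')" unfolding d using B'(4) by linarith
    ultimately show ?thesis using B B' by (intro bexI[of _ "B - B'"]) auto
  qed
qed

lemma small_subset:
  assumes al: "atomless M" and A: "A \<in> events" "0 < prob A" and e: "0 < e"
  shows "\<exists>B\<in>events. B \<subseteq> A \<and> 0 < prob B \<and> prob B < e"
proof -
  obtain n :: nat where n: "1 / e < 2 ^ n"
    using real_arch_pow[of 2 "1/e"] by auto
  have "prob A / 2^n < e"
  proof -
    have "prob A \<le> 1" by simp
    moreover have "1 < e * 2^n" using n e by (simp add: field_simps)
    ultimately have "prob A < e * 2^n" by linarith
    then show ?thesis by (simp add: field_simps)
  qed
  moreover obtain B where "B\<in>events" "B \<subseteq> A" "0 < prob B" "prob B \<le> prob A / 2^n"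
    using small_subset_aux[OF al A, of n] by blast
  ultimately show ?thesis by (intro bexI[of _ B]) auto
qed

definition greedy_step :: "'a set \<Rightarrow> 'a set \<Rightarrow> real \<Rightarrow> 'a set" where
  "greedy_step A C c = (SOME D. D \<in> events \<and> D \<subseteq> A - C \<and> prob C + prob D \<le> c \<and>
      (\<forall>E\<in>events. E \<subseteq> A - C \<and> prob C + prob E \<le> c \<longrightarrow> prob E \<le> 2 * prob D))"

lemma greedy_step_ex:
  assumes "C \<in> events" "prob C \<le> c"
  shows "\<exists>D. D \<in> events \<and> D \<subseteq> A - C \<and> prob C + prob D \<le> c \<and>
      (\<forall>E\<in>events. E \<subseteq> A - C \<and> prob C + prob E \<le> c \<longrightarrow> prob E \<le> 2 * prob D)"
proof -
  define S where "S = {prob D | D. D \<in> events \<and> D \<subseteq> A - C \<and> prob C + prob D \<le> c}"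
  have ne: "0 \<in> S" unfolding S_def using assms by (intro CollectI exI[of _ "{}"]) simp
  have bdd: "bdd_above S" unfolding S_def by (rule bdd_aboveI[of _ 1]) auto
  have inS: "prob E \<in> S" if "E \<in> events" "E \<subseteq> A - C \<and> prob C + prob E \<le> c" for E
    unfolding S_def using that by blast
  have leS: "prob E \<le> Sup S" if "E \<in> events" "E \<subseteq> A - C \<and> prob C + prob E \<le> c" for E
    using cSup_upper[OF inS[OF that] bdd] .
  show ?thesis
  proof (cases "Sup S = 0")
    case True
    show ?thesis
    proof (intro exI[of _ "{}"] conjI ballI impI)
      fix E assume "E \<in> events" "E \<subseteq> A - C \<and> prob C + prob E \<le> c"
      then show "prob E \<le> 2 * prob {}" using leS True by simp
    qed (use assms in auto)
  next
    case False
    have "Sup S \<ge> 0" using cSup_upper[OF ne bdd] .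
    with False have pos: "Sup S > 0" by simp
    have "Sup S / 2 < Sup S" using pos by simp
    then obtain x where "x \<in> S" "Sup S / 2 < x" using less_cSupE[of "Sup S / 2" S] ne by blast
    then obtain D where D: "D \<in> events" "D \<subseteq> A - C" "prob C + prob D \<le> c" "Sup S / 2 < prob D"
      unfolding S_def by blast
    show ?thesis
    proof (intro exI[of _ D] conjI D(1-3) ballI impI)
      fix E assume "E \<in> events" "E \<subseteq> A - C \<and> prob C + prob E \<le> c"
      then have "prob E \<le> Sup S" by (rule leS)
      then show "prob E \<le> 2 * prob D" using D(4) by simp
    qed
  qed
qed

primrec greedy_seq :: "'a set \<Rightarrow> real \<Rightarrow> nat \<Rightarrow> 'a set" where
  "greedy_seq A c 0 = {}"
| "greedy_seq A c (Suc n) = greedy_seq A c n \<union> greedy_step A (greedy_seq A c n) c"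

lemma greedy_seq_props:
  assumes "0 \<le> c"
  shows "greedy_seq A c n \<in> events \<and> greedy_seq A c n \<subseteq> A \<and> prob (greedy_seq A c n) \<le> c"
proof (induction n)
  case 0 then show ?case using assms by simp
next
  case (Suc n)
  let ?C = "greedy_seq A c n"
  let ?D = "greedy_step A ?C c"
  have D: "?D \<in> events \<and> ?D \<subseteq> A - ?C \<and> prob ?C + prob ?D \<le> c \<and>
      (\<forall>E\<in>events. E \<subseteq> A - ?C \<and> prob ?C + prob E \<le> c \<longrightarrow> prob E \<le> 2 * prob ?D)"
    unfolding greedy_step_def using someI_ex[OF greedy_step_ex[of ?C c A]] Suc by blast
  have "prob (?C \<union> ?D) = prob ?C + prob ?D"
    using D Suc by (intro finite_measure_Union) auto
  then show ?case using D Suc by auto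
qed

lemma greedy_step_props:
  assumes "0 \<le> c"
  shows "greedy_step A (greedy_seq A c n) c \<in> events \<and> greedy_step A (greedy_seq A c n) c \<subseteq> A - greedy_seq A c n
    \<and> prob (greedy_seq A c (Suc n)) = prob (greedy_seq A c n) + prob (greedy_step A (greedy_seq A c n) c) \<and>
      (\<forall>E\<in>events. E \<subseteq> A - greedy_seq A c n \<and> prob (greedy_seq A c n) + prob E \<le> c \<longrightarrow> prob E \<le> 2 * prob (greedy_step A (greedy_seq A c n) c))"
proof -
  let ?C = "greedy_seq A c n"
  let ?D = "greedy_step A ?C c"
  note C = greedy_seq_props[OF assms, of A n]
  have D: "?D \<in> events \<and> ?D \<subseteq> A - ?C \<and> prob ?C + prob ?D \<le> c \<and>
      (\<forall>E\<in>events. E \<subseteq> A - ?C \<and> prob ?C + prob E \<le> c \<longrightarrow> prob E \<le> 2 * prob ?D)"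
    unfolding greedy_step_def using someI_ex[OF greedy_step_ex[of ?C c A]] C by blast
  have "prob (?C \<union> ?D) = prob ?C + prob ?D"
    using D C by (intro finite_measure_Union) auto
  then show ?thesis using D by simp
qed

lemma sierpinski:
  assumes al: "atomless M" and A: "A \<in> events" and c: "0 \<le> c" "c \<le> prob A"
  shows "\<exists>C\<in>events. C \<subseteq> A \<and> prob C = c"
proof -
  let ?C = "greedy_seq A c"
  let ?U = "\<Union>n. ?C n"
  have inc: "incseq ?C" by (rule incseq_SucI) auto
  have ev: "range ?C \<subseteq> events" using greedy_seq_props[OF c(1)] by auto
  have lim: "(\<lambda>n. prob (?C n)) \<longlonglongrightarrow> prob ?U"
    using finite_Lim_measure_incseq[OF ev inc] .
  have Uev: "?U \<in> events" using ev by auto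
  have UA: "?U \<subseteq> A" using greedy_seq_props[OF c(1)] by auto
  have Ule: "prob ?U \<le> c"
    using lim greedy_seq_props[OF c(1)] by (intro LIMSEQ_le_const2[OF lim]) auto
  have "prob ?U = c"
  proof (rule ccontr)
    assume "prob ?U \<noteq> c"
    then have lt: "prob ?U < c" using Ule by simp
    have "prob (A - ?U) = prob A - prob ?U" using finite_measure_Diff[OF A Uev UA] .
    then have "0 < prob (A - ?U)" using lt c by simp
    then obtain E where E: "E \<in> events" "E \<subseteq> A - ?U" "0 < prob E" "prob E < c - prob ?U"
      using small_subset[OF al _ _, of "A - ?U" "c - prob ?U"] A Uev lt by auto
    have grow: "prob (?C n) \<ge> real n * prob E / 2" for n
    proof (induction n)
      case 0 show ?case by simp
    next
      case (Suc n)
      note S = greedy_step_props[OF c(1), of A n]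
      have "?C n \<subseteq> ?U" by auto
      then have "prob (?C n) \<le> prob ?U" using Uev by (intro finite_measure_mono) auto
      then have "prob (?C n) + prob E \<le> c" using E by linarith
      moreover have "E \<subseteq> A - ?C n" using E(2) by auto
      ultimately have "prob E \<le> 2 * prob (greedy_step A (?C n) c)"
        using S E(1) by blast
      moreover have "prob (?C (Suc n)) = prob (?C n) + prob (greedy_step A (?C n) c)" using S by blast
      ultimately show ?case using Suc by (simp add: algebra_simps)
    qed
    obtain n :: nat where n: "2 / prob E < real n" using reals_Archimedean2 by auto
    have "real n * prob E / 2 > 1" using n E(3) by (simp add: field_simps)
    moreover have "prob (?C n) \<le> 1" by simp
    ultimately show False using grow[of n] by simp
  qed
  then show ?thesis using Uev UA by auto
qed

end

lemma par_lem: "(j::nat) div 2 = j' div 2 \<Longrightarrow> j \<noteq> j' \<Longrightarrow> even j \<noteq> even j'"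
proof
  assume a: "j div 2 = j' div 2" "j \<noteq> j'" "even j = even j'"
  have "j mod 2 = j' mod 2" using a(3) by (simp add: mod2_eq_if)
  moreover have "j = 2 * (j div 2) + j mod 2" "j' = 2 * (j' div 2) + j' mod 2" by simp_all
  ultimately show False using a(1,2) by simp
qed

lemma lin_aux: "(x::real) \<le> y + b \<Longrightarrow> y \<le> z + c - a \<Longrightarrow> b = a/2 \<Longrightarrow> x \<le> z + c - b"
  by linarith
lemma lin_aux2: "(x::real) \<le> 1 - c \<Longrightarrow> 0 \<le> c \<Longrightarrow> x \<le> 1"
  by linarith

definition unif :: "real measure" where
  "unif = density lborel (\<lambda>x. ennreal (indicator {0..1::real} x))"

lemma sets_unif[simp, measurable_cong]: "sets unif = sets borel"
  unfolding unif_def by simp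

lemma space_unif[simp]: "space unif = UNIV"
  unfolding unif_def by simp

lemma emeasure_unif:
  assumes A: "A \<in> sets borel"
  shows "emeasure unif A = emeasure lborel ({0..1} \<inter> A)"
proof -
  have "emeasure unif A = (\<integral>\<^sup>+x. ennreal (indicator {0..1::real} x) * indicator A x \<partial>lborel)"
    unfolding unif_def using A by (subst emeasure_density) auto
  also have "\<dots> = (\<integral>\<^sup>+x. indicator ({0..1} \<inter> A) x \<partial>lborel)"
    by (intro nn_integral_cong) (auto split: split_indicator)
  also have "\<dots> = emeasure lborel ({0..1} \<inter> A)"
    using A by (intro nn_integral_indicator) auto
  finally show ?thesis .
qed

lemma prob_space_unif: "prob_space unif"
  by (rule prob_spaceI) (simp add: emeasure_unif)

lemma real_distribution_unif: "real_distribution unif"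
  unfolding real_distribution_def real_distribution_axioms_def using prob_space_unif by simp

lemma measure_unif: "A \<in> sets borel \<Longrightarrow> measure unif A = measure lborel ({0..1} \<inter> A)"
  unfolding measure_def by (simp add: emeasure_unif)

lemma integral_unif:
  fixes f :: "real \<Rightarrow> real"
  assumes "f \<in> borel_measurable borel"
  shows "integral\<^sup>L unif f = (LBINT x:{0..1}. f x)"
  unfolding unif_def set_lebesgue_integral_def using assms
  by (subst integral_density) auto

lemma cdf_unif: "cdf unif t = max 0 (min 1 t)"
proof -
  have "cdf unif t = measure lborel ({0..1} \<inter> {..t})"
    unfolding cdf_def by (simp add: measure_unif)
  also have "\<dots> = max 0 (min 1 t)"
  proof (cases "t < 0")
    case True then have "{0..1} \<inter> {..t} = {}" by auto
    then show ?thesis using True by simp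
  next
    case False
    then have "{0..1} \<inter> {..t} = {0..min 1 t}" by auto
    then show ?thesis using False by simp
  qed
  finally show ?thesis .
qed

context prob_space
begin

definition half :: "'a set \<Rightarrow> 'a set" where
  "half A = (SOME B. B \<in> events \<and> B \<subseteq> A \<and> prob B = prob A / 2)"

lemma half_props:
  assumes al: "atomless M" and A: "A \<in> events"
  shows "half A \<in> events \<and> half A \<subseteq> A \<and> prob (half A) = prob A / 2"
proof -
  have "\<exists>B. B \<in> events \<and> B \<subseteq> A \<and> prob B = prob A / 2"
    using sierpinski[OF al A, of "prob A / 2"] by auto
  then show ?thesis unfolding half_def by (rule someI_ex)
qed

primrec dcell :: "nat \<Rightarrow> nat \<Rightarrow> 'a set" where
  "dcell 0 j = (if j = 0 then space M else {})"
| "dcell (Suc k) j = (if even j then half (dcell k (j div 2)) else dcell k (j div 2) - half (dcell k (j div 2)))"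

lemma dcell_props:
  assumes al: "atomless M"
  shows "dcell k j \<in> events \<and> prob (dcell k j) = (if j < 2^k then 1 / 2^k else 0)"
proof (induction k arbitrary: j)
  case 0 then show ?case by (simp add: prob_space)
next
  case (Suc k)
  let ?A = "dcell k (j div 2)"
  have IH: "?A \<in> events" "prob ?A = (if j div 2 < 2^k then 1 / 2^k else 0)" using Suc by auto
  note H = half_props[OF al IH(1)]
  have jj: "(j div 2 < 2^k) = (j < 2^Suc k)" by auto
  show ?case
  proof (cases "even j")
    case True
    have "dcell (Suc k) j = half ?A" using True by simp
    moreover have "prob (half ?A) = (if j < 2^Suc k then 1 / 2^Suc k else 0)"
      using H IH(2) jj by (cases "j < 2^Suc k") auto
    ultimately show ?thesis using H by simp
  next
    case False
    have "prob (?A - half ?A) = prob ?A - prob (half ?A)"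
      using finite_measure_Diff[OF IH(1)] H by blast
    moreover have "dcell (Suc k) j = ?A - half ?A" using False by simp
    moreover have "prob ?A - prob (half ?A) = (if j < 2^Suc k then 1 / 2^Suc k else 0)"
      using H IH(2) jj by (cases "j < 2^Suc k") auto
    ultimately show ?thesis using H IH by auto
  qed
qed

lemma dcell_sub: "atomless M \<Longrightarrow> dcell (Suc k) j \<subseteq> dcell k (j div 2)"
  using half_props[of "dcell k (j div 2)"] dcell_props[of k "j div 2"] by auto

lemma dcell_space: "atomless M \<Longrightarrow> dcell k j \<subseteq> space M"
  using dcell_props[of k j] sets.sets_into_space by blast

lemma dcell_disj:
  assumes al: "atomless M"
  shows "j \<noteq> j' \<Longrightarrow> dcell k j \<inter> dcell k j' = {}"
proof (induction k arbitrary: j j')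
  case 0 then show ?case by auto
next
  case (Suc k)
  show ?case
  proof (cases "j div 2 = j' div 2")
    case True
    then have "even j \<noteq> even j'" using Suc.prems by (rule par_lem)
    then show ?thesis using True by auto
  next
    case False
    then have "dcell k (j div 2) \<inter> dcell k (j' div 2) = {}" using Suc.IH by blast
    then show ?thesis using dcell_sub[OF al, of k j] dcell_sub[OF al, of k j'] by blast
  qed
qed

lemma dcell_cover:
  assumes al: "atomless M"
  shows "\<omega> \<in> space M \<Longrightarrow> \<exists>j<2^k. \<omega> \<in> dcell k j"
proof (induction k)
  case 0 then show ?case by simp
next
  case (Suc k)
  then obtain j where j: "j < 2^k" "\<omega> \<in> dcell k j" by auto
  show ?case
  proof (cases "\<omega> \<in> half (dcell k j)")
    case True
    have "dcell (Suc k) (2*j) = half (dcell k j)" by simp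
    then show ?thesis using True j by (intro exI[of _ "2*j"]) auto
  next
    case False
    have "dcell (Suc k) (2*j+1) = dcell k j - half (dcell k j)" by simp
    then show ?thesis using False j by (intro exI[of _ "2*j+1"]) auto
  qed
qed

lemma dcell_empty:
  assumes al: "atomless M"
  shows "j \<ge> 2^k \<Longrightarrow> dcell k j = {}"
proof (induction k arbitrary: j)
  case 0 then show ?case by simp
next
  case (Suc k)
  then have "j div 2 \<ge> 2^k" by auto
  then have e: "dcell k (j div 2) = {}" using Suc.IH by blast
  have "half {} \<subseteq> {}" using half_props[OF al, of "{}"] by auto
  then show ?case using e by simp
qed

definition Fk :: "nat \<Rightarrow> 'a \<Rightarrow> real" where
  "Fk k \<omega> = (\<Sum>j<2^k. (real j / 2^k) * indicator (dcell k j) \<omega>)"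

lemma Fk_eq:
  assumes al: "atomless M" and "\<omega> \<in> dcell k j"
  shows "Fk k \<omega> = real j / 2^k"
proof -
  have j: "j < 2^k" using assms dcell_empty[OF al, of k j] by (cases "j < 2^k") auto
  have "Fk k \<omega> = (\<Sum>i<2^k. if i = j then real j / 2^k else 0)"
    unfolding Fk_def
  proof (rule sum.cong)
    fix i assume "i \<in> {..<(2::nat)^k}"
    show "real i / 2^k * indicator (dcell k i) \<omega> = (if i = j then real j / 2^k else 0)"
    proof (cases "i = j")
      case True then show ?thesis using assms by simp
    next
      case False
      then have "\<omega> \<notin> dcell k i" using dcell_disj[OF al False, of k] assms by blast
      then show ?thesis using False by simp
    qed
  qed simp
  also have "\<dots> = real j / 2^k" using j by simp
  finally show ?thesis .
qed

lemma Fk_meas[measurable]: "atomless M \<Longrightarrow> Fk k \<in> borel_measurable M"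
  unfolding Fk_def using dcell_props
  by (intro borel_measurable_sum borel_measurable_times borel_measurable_const borel_measurable_indicator) auto

lemma Fk_step:
  assumes al: "atomless M" and \<omega>: "\<omega> \<in> space M"
  shows "Fk k \<omega> \<le> Fk (Suc k) \<omega> \<and> Fk (Suc k) \<omega> \<le> Fk k \<omega> + 1 / 2^Suc k"
proof -
  obtain j where j: "\<omega> \<in> dcell (Suc k) j" using dcell_cover[OF al \<omega>] by blast
  then have j2: "\<omega> \<in> dcell k (j div 2)" using dcell_sub[OF al] by blast
  have a: "Fk (Suc k) \<omega> = real j / 2^Suc k" using Fk_eq[OF al j] .
  have b: "Fk k \<omega> = real (j div 2) / 2^k" using Fk_eq[OF al j2] .
  have "j = 2 * (j div 2) + j mod 2" by simp
  then have "real j = real (2 * (j div 2) + j mod 2)" by (rule arg_cong)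
  then have "real j = 2 * real (j div 2) + real (j mod 2)"
    by (simp only: of_nat_add of_nat_mult of_nat_numeral)
  moreover have "real (j mod 2) \<le> 1" by simp
  ultimately show ?thesis unfolding a b by (auto simp: field_simps)
qed

lemma Fk_range:
  assumes al: "atomless M" and \<omega>: "\<omega> \<in> space M"
  shows "0 \<le> Fk k \<omega> \<and> Fk k \<omega> \<le> 1 - 1 / 2^k"
proof -
  obtain j where j: "j < 2^k" "\<omega> \<in> dcell k j" using dcell_cover[OF al \<omega>] by blast
  have "j + 1 \<le> 2^k" using j(1) by simp
  then have "real (j + 1) \<le> real (2^k)" by (simp only: of_nat_le_iff)
  then have "real j + 1 \<le> 2^k" by simp
  then have "real j / 2^k \<le> 1 - 1/2^k" by (simp add: field_simps)
  then show ?thesis using Fk_eq[OF al j(2)] by simp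
qed

lemma Fk_mono:
  assumes al: "atomless M" and \<omega>: "\<omega> \<in> space M"
  shows "k \<le> m \<Longrightarrow> Fk k \<omega> \<le> Fk m \<omega> \<and> Fk m \<omega> \<le> Fk k \<omega> + 1/2^k - 1/2^m"
proof (induction m rule: dec_induct)
  case base then show ?case by simp
next
  case (step m)
  have "1/2^Suc m = (1/2^m)/(2::real)" by simp
  moreover note a = step.IH Fk_step[OF al \<omega>, of m]
  show ?case
  proof (intro conjI)
    show "Fk k \<omega> \<le> Fk (Suc m) \<omega>" using conjunct1[OF a(1)] conjunct1[OF a(2)] by linarith
    show "Fk (Suc m) \<omega> \<le> Fk k \<omega> + 1 / 2 ^ k - 1 / 2 ^ Suc m"
      using conjunct2[OF a(2)] conjunct2[OF a(1)] \<open>1/2^Suc m = (1/2^m)/(2::real)\<close> by (rule lin_aux)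
  qed
qed

definition Uv :: "'a \<Rightarrow> real" where
  "Uv \<omega> = lim (\<lambda>k. Fk k \<omega>)"

lemma Fk_lim:
  assumes al: "atomless M" and \<omega>: "\<omega> \<in> space M"
  shows "(\<lambda>k. Fk k \<omega>) \<longlonglongrightarrow> Uv \<omega>"
proof -
  have inc: "incseq (\<lambda>k. Fk k \<omega>)" using Fk_mono[OF al \<omega>] by (intro incseq_SucI) auto
  have "norm (Fk k \<omega>) \<le> 1" for k
  proof -
    have "(0::real) \<le> 1/2^k" by simp
    then show ?thesis using conjunct1[OF Fk_range[OF al \<omega>, of k]] conjunct2[OF Fk_range[OF al \<omega>, of k]]
      by (simp add: lin_aux2)
  qed
  then have bs: "Bseq (\<lambda>k. Fk k \<omega>)" by (intro BseqI'[of _ 1]) 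
  have "convergent (\<lambda>k. Fk k \<omega>)"
    by (rule Bseq_monoseq_convergent[OF bs incseq_imp_monoseq[OF inc]])
  then show ?thesis unfolding Uv_def by (simp add: convergent_LIMSEQ_iff)
qed

end

context prob_space
begin

lemma Uv_meas[measurable]: "atomless M \<Longrightarrow> Uv \<in> borel_measurable M"
  by (rule borel_measurable_LIMSEQ_metric[OF Fk_meas Fk_lim])

lemma Uv_bounds:
  assumes al: "atomless M" and \<omega>: "\<omega> \<in> space M"
  shows "Fk k \<omega> \<le> Uv \<omega> \<and> Uv \<omega> \<le> Fk k \<omega> + 1/2^k"
proof
  have inc: "incseq (\<lambda>k. Fk k \<omega>)" using Fk_mono[OF al \<omega>] by (intro incseq_SucI) auto
  show "Fk k \<omega> \<le> Uv \<omega>" using incseq_le[OF inc Fk_lim[OF al \<omega>]] .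
  show "Uv \<omega> \<le> Fk k \<omega> + 1/2^k"
  proof (rule LIMSEQ_le_const2[OF Fk_lim[OF al \<omega>]])
    show "\<exists>N. \<forall>n\<ge>N. Fk n \<omega> \<le> Fk k \<omega> + 1 / 2 ^ k"
    proof (intro exI[of _ k] allI impI)
      fix n assume "k \<le> n"
      from conjunct2[OF Fk_mono[OF al \<omega> this]] have "Fk n \<omega> \<le> Fk k \<omega> + 1 / 2 ^ k - 1 / 2 ^ n" .
      moreover have "(0::real) \<le> 1/2^n" by simp
      ultimately show "Fk n \<omega> \<le> Fk k \<omega> + 1 / 2 ^ k" by linarith
    qed
  qed
qed

lemma Uv_range:
  assumes al: "atomless M" and \<omega>: "\<omega> \<in> space M"
  shows "0 \<le> Uv \<omega> \<and> Uv \<omega> \<le> 1"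
proof
  show "0 \<le> Uv \<omega>" using Uv_bounds[OF al \<omega>, of 0] Fk_range[OF al \<omega>, of 0] by linarith
  have "Uv \<omega> \<le> Fk 0 \<omega> + 1/2^0" using Uv_bounds[OF al \<omega>, of 0] by blast
  moreover have "Fk 0 \<omega> \<le> 1 - 1/2^0" using Fk_range[OF al \<omega>, of 0] by blast
  ultimately show "Uv \<omega> \<le> 1" by simp
qed

definition Cset :: "nat \<Rightarrow> nat \<Rightarrow> 'a set" where
  "Cset k m = (\<Union>j<m. dcell k j)"

lemma Cset_ev: "atomless M \<Longrightarrow> Cset k m \<in> events"
  unfolding Cset_def using dcell_props by (intro sets.finite_UN) auto

lemma prob_Cset:
  assumes al: "atomless M"
  shows "prob (Cset k m) = (\<Sum>j<m. if j < 2^k then 1 / 2^k else 0)"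
proof -
  have "prob (Cset k m) = (\<Sum>j<m. prob (dcell k j))"
    unfolding Cset_def
  proof (rule finite_measure_finite_Union)
    show "finite {..<m}" by simp
    show "(\<lambda>j. dcell k j) ` {..<m} \<subseteq> events" using dcell_props[OF al] by auto
    show "disjoint_family_on (dcell k) {..<m}"
      unfolding disjoint_family_on_def using dcell_disj[OF al] by blast
  qed
  also have "\<dots> = (\<Sum>j<m. if j < 2^k then 1 / 2^k else 0)"
    using dcell_props[OF al] by (intro sum.cong) auto
  finally show ?thesis .
qed

lemma prob_Cset_le:
  assumes al: "atomless M"
  shows "prob (Cset k m) \<le> real m / 2^k"
proof -
  have "prob (Cset k m) \<le> (\<Sum>j<m. 1 / 2^k)"
    unfolding prob_Cset[OF al] by (intro sum_mono) auto
  then show ?thesis by simp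
qed

lemma prob_Cset_eq:
  assumes al: "atomless M" and "m \<le> 2^k"
  shows "prob (Cset k m) = real m / 2^k"
proof -
  have "prob (Cset k m) = (\<Sum>j<m. 1 / 2^k)"
    unfolding prob_Cset[OF al] using assms(2) by (intro sum.cong) auto
  then show ?thesis by simp
qed

lemma Uv_cdf_approx:
  assumes al: "atomless M" and t: "0 \<le> t" "t \<le> 1"
  shows "\<bar>prob {\<omega>\<in>space M. Uv \<omega> \<le> t} - t\<bar> \<le> 1/2^k"
proof -
  define m where "m = nat \<lfloor>t * 2^k\<rfloor>"
  have fl0: "0 \<le> \<lfloor>t * 2^k\<rfloor>" using t by simp
  have m1: "real m \<le> t * 2^k" unfolding m_def using fl0 by simp
  have m2: "t * 2^k < real m + 1" unfolding m_def using fl0 by linarith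
  have "\<lfloor>t * 2^k\<rfloor> \<le> \<lfloor>(2::real)^k\<rfloor>" using t by (intro floor_mono) simp
  then have "m \<le> 2^k" unfolding m_def by (simp add: nat_le_iff)
  have ev: "{\<omega>\<in>space M. Uv \<omega> \<le> t} \<in> events" using Uv_meas[OF al] by measurable
  have sub1: "Cset k m \<subseteq> {\<omega>\<in>space M. Uv \<omega> \<le> t}"
  proof
    fix \<omega> assume "\<omega> \<in> Cset k m"
    then obtain j where j: "j < m" "\<omega> \<in> dcell k j" unfolding Cset_def by auto
    have \<omega>: "\<omega> \<in> space M" using j(2) dcell_space[OF al] by auto
    have "Uv \<omega> \<le> real j / 2^k + 1/2^k" using Uv_bounds[OF al \<omega>, of k] Fk_eq[OF al j(2)] by simp
    also have "\<dots> = (real j + 1) / 2^k" by (simp add: add_divide_distrib)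
    also have "\<dots> \<le> real m / 2^k" using j(1) by (intro divide_right_mono) auto
    also have "\<dots> \<le> t" using m1 by (simp add: divide_le_eq)
    finally show "\<omega> \<in> {\<omega>\<in>space M. Uv \<omega> \<le> t}" using \<omega> by simp
  qed
  have sub2: "{\<omega>\<in>space M. Uv \<omega> \<le> t} \<subseteq> Cset k (m+1)"
  proof
    fix \<omega> assume a: "\<omega> \<in> {\<omega>\<in>space M. Uv \<omega> \<le> t}"
    then have \<omega>: "\<omega> \<in> space M" by simp
    obtain j where j: "j < 2^k" "\<omega> \<in> dcell k j" using dcell_cover[OF al \<omega>] by blast
    have "real j / 2^k \<le> t" using Uv_bounds[OF al \<omega>, of k] Fk_eq[OF al j(2)] a by simp
    then have "real j \<le> t * 2^k" by (simp add: divide_le_eq)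
    then have "int j \<le> \<lfloor>t * 2^k\<rfloor>" by (simp add: le_floor_iff)
    then have "j < m + 1" unfolding m_def by simp
    then show "\<omega> \<in> Cset k (m+1)" unfolding Cset_def using j by auto
  qed
  have "prob (Cset k m) \<le> prob {\<omega>\<in>space M. Uv \<omega> \<le> t}"
    using sub1 ev by (intro finite_measure_mono) auto
  then have lo: "real m / 2^k \<le> prob {\<omega>\<in>space M. Uv \<omega> \<le> t}"
    using prob_Cset_eq[OF al \<open>m \<le> 2^k\<close>] by simp
  have "prob {\<omega>\<in>space M. Uv \<omega> \<le> t} \<le> prob (Cset k (m+1))"
    using sub2 Cset_ev[OF al] by (intro finite_measure_mono) auto
  also have "\<dots> \<le> real (m+1) / 2^k" by (rule prob_Cset_le[OF al])
  finally have hi: "prob {\<omega>\<in>space M. Uv \<omega> \<le> t} \<le> (real m + 1) / 2^k" by (simp add: add.commute)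
  have "t*2^k - 1 \<le> real m" using m2 by linarith
  then have "(t*2^k - 1)/2^k \<le> real m / 2^k" by (rule divide_right_mono) simp
  moreover have "(t*2^k - 1)/2^k = t - 1/2^k" by (simp add: diff_divide_distrib)
  ultimately have a1: "t - 1/2^k \<le> real m / 2^k" by simp
  have a2: "(real m + 1) / 2^k \<le> t + 1/2^k" using m1 by (simp add: field_simps)
  show ?thesis using lo hi a1 a2 by (simp add: abs_le_iff)
qed

lemma Uv_cdf:
  assumes al: "atomless M"
  shows "prob {\<omega>\<in>space M. Uv \<omega> \<le> t} = max 0 (min 1 t)"
proof (cases "t < 0")
  case True
  have e: "{\<omega>\<in>space M. Uv \<omega> \<le> t} = {}" using Uv_range[OF al] True by force
  show ?thesis unfolding e using True by simp
next
  case False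
  show ?thesis
  proof (cases "t > 1")
    case True
    have e: "{\<omega>\<in>space M. Uv \<omega> \<le> t} = space M" using Uv_range[OF al] True by force
    show ?thesis unfolding e using True by (simp add: prob_space)
  next
    case False2: False
    let ?p = "prob {\<omega>\<in>space M. Uv \<omega> \<le> t}"
    have "?p = t"
    proof (rule ccontr)
      assume "?p \<noteq> t"
      then have pos: "0 < \<bar>?p - t\<bar>" by simp
      obtain k :: nat where k: "1 / \<bar>?p - t\<bar> < 2 ^ k" using real_arch_pow[of 2 "1 / \<bar>?p - t\<bar>"] by auto
      then have "1 / 2^k < \<bar>?p - t\<bar>" using pos by (simp add: field_simps)
      then show False using Uv_cdf_approx[OF al, of t k] False False2 by simp
    qed
    then show ?thesis using False False2 by simp
  qed
qed

lemma distr_Uv: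
  assumes al: "atomless M"
  shows "distr M borel Uv = unif"
proof (rule cdf_unique)
  show "real_distribution (distr M borel Uv)" using Uv_meas[OF al] by simp
  show "real_distribution unif" by (rule real_distribution_unif)
  show "cdf (distr M borel Uv) = cdf unif"
  proof
    fix t
    have "cdf (distr M borel Uv) t = prob (Uv -` {..t} \<inter> space M)"
      unfolding cdf_def using Uv_meas[OF al] by (subst measure_distr) auto
    also have "Uv -` {..t} \<inter> space M = {\<omega>\<in>space M. Uv \<omega> \<le> t}" by auto
    finally show "cdf (distr M borel Uv) t = cdf unif t" using Uv_cdf[OF al] cdf_unif by simp
  qed
qed

lemma exists_uniform:
  assumes al: "atomless M"
  shows "\<exists>U. U \<in> borel_measurable M \<and> distr M borel U = unif \<and> (\<forall>\<omega>\<in>space M. 0 \<le> U \<omega> \<and> U \<omega> \<le> 1)"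
  using Uv_meas[OF al] distr_Uv[OF al] Uv_range[OF al] by blast

end

context prob_space
begin

lemma Linf_meas: "X \<in> Linf M \<Longrightarrow> X \<in> borel_measurable M"
  unfolding Linf_def by simp

definition bnd :: "('a \<Rightarrow> real) \<Rightarrow> real" where
  "bnd X = (SOME C. 0 \<le> C \<and> (AE \<omega> in M. \<bar>X \<omega>\<bar> \<le> C))"

lemma bnd:
  assumes "X \<in> Linf M"
  shows "0 \<le> bnd X \<and> (AE \<omega> in M. \<bar>X \<omega>\<bar> \<le> bnd X)"
proof -
  obtain C where C: "AE \<omega> in M. \<bar>X \<omega>\<bar> \<le> C" using assms unfolding Linf_def by auto
  have "AE \<omega> in M. \<bar>X \<omega>\<bar> \<le> max C 0" using C by eventually_elim simp
  then have "\<exists>C. 0 \<le> C \<and> (AE \<omega> in M. \<bar>X \<omega>\<bar> \<le> C)" by (intro exI[of _ "max C 0"]) simp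
  then show ?thesis unfolding bnd_def by (rule someI_ex)
qed

lemma cdf_rv_eq:
  assumes "X \<in> borel_measurable M"
  shows "cdf_rv M X x = cdf (distr M borel X) x"
proof -
  have "cdf (distr M borel X) x = prob (X -` {..x} \<inter> space M)"
    unfolding cdf_def using assms by (subst measure_distr) auto
  also have "X -` {..x} \<inter> space M = {\<omega>\<in>space M. X \<omega> \<le> x}" by auto
  finally show ?thesis unfolding cdf_rv_def by simp
qed

lemma F_mono: "X \<in> borel_measurable M \<Longrightarrow> x \<le> y \<Longrightarrow> cdf_rv M X x \<le> cdf_rv M X y"
  using finite_borel_measure.cdf_nondecreasing[OF real_distribution.finite_borel_measure_M, of "distr M borel X"] cdf_rv_eq by simp

lemma F_rcont: "X \<in> borel_measurable M \<Longrightarrow> continuous (at_right a) (cdf_rv M X)"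
proof -
  assume X: "X \<in> borel_measurable M"
  have "cdf_rv M X = cdf (distr M borel X)" using cdf_rv_eq[OF X] by auto
  then show ?thesis using finite_borel_measure.cdf_is_right_cont[OF real_distribution.finite_borel_measure_M, of "distr M borel X"] X by simp
qed

lemma F_01: "0 \<le> cdf_rv M X x \<and> cdf_rv M X x \<le> 1"
  unfolding cdf_rv_def by simp

lemma F_top:
  assumes X: "X \<in> Linf M" and x: "bnd X \<le> x"
  shows "cdf_rv M X x = 1"
proof -
  have m: "X \<in> borel_measurable M" using Linf_meas[OF X] .
  have "AE \<omega> in M. X \<omega> \<le> x" using conjunct2[OF bnd[OF X]] by eventually_elim (use x in auto)
  moreover have "{\<omega>\<in>space M. X \<omega> \<le> x} \<in> events" using m by measurable
  ultimately show ?thesis unfolding cdf_rv_def using prob_Collect_eq_1 by simp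
qed

lemma F_bot:
  assumes X: "X \<in> Linf M" and x: "x < - bnd X"
  shows "cdf_rv M X x = 0"
proof -
  have m: "X \<in> borel_measurable M" using Linf_meas[OF X] .
  have "AE \<omega> in M. \<not> X \<omega> \<le> x" using conjunct2[OF bnd[OF X]] by eventually_elim (use x in auto)
  moreover have "{\<omega>\<in>space M. X \<omega> \<le> x} \<in> events" using m by measurable
  ultimately show ?thesis unfolding cdf_rv_def using prob_Collect_eq_0 by simp
qed

lemma least_level:
  fixes F :: "real \<Rightarrow> real"
  assumes rc: "\<And>a. continuous (at_right a) F" and mono: "\<And>x y. x \<le> y \<Longrightarrow> F x \<le> F y"
    and ne: "u \<le> F b" and bd: "\<And>x. u \<le> F x \<Longrightarrow> a \<le> x"
  shows "u \<le> F (Inf {x. u \<le> F x}) \<and> (\<forall>x. u \<le> F x \<longrightarrow> Inf {x. u \<le> F x} \<le> x)"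
proof
  let ?S = "{x. u \<le> F x}"
  have bdd: "bdd_below ?S" using bd by (intro bdd_belowI[of _ a]) auto
  have neS: "?S \<noteq> {}" using ne by auto
  show "\<forall>x. u \<le> F x \<longrightarrow> Inf ?S \<le> x" using cInf_lower[OF _ bdd] by auto
  let ?r = "Inf ?S"
  have lim: "(F \<longlongrightarrow> F ?r) (at_right ?r)" using rc[of ?r] unfolding continuous_within .
  have all: "\<forall>x. ?r < x \<longrightarrow> u \<le> F x"
  proof (intro allI impI)
    fix x assume "?r < x"
    then obtain s where "s \<in> ?S" "s < x" using cInf_lessD[OF neS] by blast
    then show "u \<le> F x" using mono[of s x] by auto
  qed
  have ev: "eventually (\<lambda>x. u \<le> F x) (at_right ?r)"
    using eventually_at_right_less[of ?r] by eventually_elim (use all in auto)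
  show "u \<le> F ?r" by (rule tendsto_lowerbound[OF lim ev]) simp
qed

lemma VaR_least:
  assumes X: "X \<in> Linf M" and u: "0 < u" "u \<le> 1"
  shows "\<exists>r. VaR M u X = ereal r \<and> u \<le> cdf_rv M X r \<and> (\<forall>x. u \<le> cdf_rv M X x \<longrightarrow> r \<le> x)"
proof -
  have m: "X \<in> borel_measurable M" using Linf_meas[OF X] .
  let ?F = "cdf_rv M X"
  have ne: "u \<le> ?F (bnd X)" using F_top[OF X] u by simp
  have bd: "- bnd X \<le> x" if "u \<le> ?F x" for x
  proof (rule ccontr)
    assume "\<not> - bnd X \<le> x"
    then have "?F x = 0" using F_bot[OF X] by simp
    then show False using that u by simp
  qed
  define r where "r = Inf {x. u \<le> ?F x}"
  have r: "u \<le> ?F r" "\<forall>x. u \<le> ?F x \<longrightarrow> r \<le> x"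
    using least_level[of ?F u "bnd X" "- bnd X", OF F_rcont[OF m] F_mono[OF m] ne bd] unfolding r_def by auto
  have "VaR M u X = ereal r"
    unfolding VaR_def
  proof (rule antisym)
    show "Inf {ereal x |x. u \<le> ?F x} \<le> ereal r" using r(1) by (intro Inf_lower) auto
    show "ereal r \<le> Inf {ereal x |x. u \<le> ?F x}" using r(2) by (intro Inf_greatest) auto
  qed
  then show ?thesis using r by blast
qed

definition qf :: "('a \<Rightarrow> real) \<Rightarrow> real \<Rightarrow> real" where
  "qf X u = (if u \<le> 0 then - bnd X else real_of_ereal (VaR M (min u 1) X))"

lemma qf_char:
  assumes X: "X \<in> Linf M" and u: "0 < u" "u \<le> 1"
  shows "VaR M u X = ereal (qf X u) \<and> u \<le> cdf_rv M X (qf X u) \<and> (\<forall>x. u \<le> cdf_rv M X x \<longrightarrow> qf X u \<le> x)"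
proof -
  obtain r where r: "VaR M u X = ereal r" "u \<le> cdf_rv M X r" "\<forall>x. u \<le> cdf_rv M X x \<longrightarrow> r \<le> x"
    using VaR_least[OF X u] by blast
  have "min u 1 = u" using u by simp
  then have "qf X u = r" unfolding qf_def using u r(1) by simp
  then show ?thesis using r by simp
qed

lemma qf_galois:
  assumes X: "X \<in> Linf M" and u: "0 < u" "u \<le> 1"
  shows "qf X u \<le> y \<longleftrightarrow> u \<le> cdf_rv M X y"
proof
  assume "qf X u \<le> y"
  then have "cdf_rv M X (qf X u) \<le> cdf_rv M X y" using F_mono[OF Linf_meas[OF X]] by blast
  then show "u \<le> cdf_rv M X y" using qf_char[OF X u] by linarith
next
  assume "u \<le> cdf_rv M X y"
  then show "qf X u \<le> y" using qf_char[OF X u] by blast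
qed

lemma qf_bounds:
  assumes X: "X \<in> Linf M"
  shows "- bnd X \<le> qf X u \<and> qf X u \<le> bnd X"
proof (cases "u \<le> 0")
  case True then show ?thesis using bnd[OF X] unfolding qf_def by simp
next
  case False
  define v where "v = min u 1"
  have v: "0 < v" "v \<le> 1" using False unfolding v_def by auto
  have "min v 1 = v" using v by simp
  then have qv: "qf X u = qf X v" unfolding qf_def v_def using False by (simp add: min_le_iff_disj)
  have "qf X v \<le> bnd X" using qf_galois[OF X v] F_top[OF X] v by simp
  moreover have "- bnd X \<le> qf X v"
  proof (rule ccontr)
    assume "\<not> - bnd X \<le> qf X v"
    then have "cdf_rv M X (qf X v) = 0" using F_bot[OF X] by simp
    then show False using qf_char[OF X v] v by simp
  qed
  ultimately show ?thesis using qv by simp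
qed

lemma qf_mono:
  assumes X: "X \<in> Linf M"
  shows "mono (qf X)"
proof (rule monoI)
  fix u v :: real assume uv: "u \<le> v"
  show "qf X u \<le> qf X v"
  proof (cases "u \<le> 0")
    case True
    then have "qf X u = - bnd X" unfolding qf_def by simp
    then show ?thesis using qf_bounds[OF X, of v] by simp
  next
    case False
    define u' where "u' = min u 1"
    define v' where "v' = min v 1"
    have u': "0 < u'" "u' \<le> 1" using False unfolding u'_def by auto
    have v': "0 < v'" "v' \<le> 1" using False uv unfolding v'_def by auto
    have "min u' 1 = u'" "min v' 1 = v'" using u' v' by simp_all
    then have qu: "qf X u = qf X u'" and qv: "qf X v = qf X v'"
      unfolding qf_def u'_def v'_def using False uv by (simp_all add: min_le_iff_disj)
    have "v' \<le> cdf_rv M X (qf X v')" using qf_char[OF X v'] by blast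
    moreover have "u' \<le> v'" unfolding u'_def v'_def using uv by simp
    ultimately have "u' \<le> cdf_rv M X (qf X v')" by simp
    then show ?thesis using qf_galois[OF X u'] qu qv by simp
  qed
qed

lemma qf_meas[measurable]: "X \<in> Linf M \<Longrightarrow> qf X \<in> borel_measurable borel"
  using qf_mono by (intro borel_measurable_mono)

lemma emeasure_mid:
  fixes a :: real and S :: "real set"
  assumes "0 \<le> a" "{0<..a} \<subseteq> S" "S \<subseteq> {0..a}" "S \<in> sets borel"
  shows "measure lborel S = a"
proof -
  have "emeasure lborel {0<..a} \<le> emeasure lborel S" using assms by (intro emeasure_mono) auto
  moreover have "emeasure lborel S \<le> emeasure lborel {0..a}" using assms by (intro emeasure_mono) auto
  ultimately have "emeasure lborel S = ennreal a" using assms(1) by (simp add: antisym)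
  then show ?thesis unfolding measure_def using assms(1) by simp
qed

lemma distr_qf:
  assumes X: "X \<in> Linf M"
  shows "distr unif borel (qf X) = distr M borel X"
proof (rule cdf_unique)
  have m: "X \<in> borel_measurable M" using Linf_meas[OF X] .
  show "real_distribution (distr M borel X)" using m by simp
  show "real_distribution (distr unif borel (qf X))"
    using prob_space.real_distribution_distr[OF prob_space_unif] qf_meas[OF X] by simp
  show "cdf (distr unif borel (qf X)) = cdf (distr M borel X)"
  proof
    fix y
    let ?S = "{0..1} \<inter> qf X -` {..y}"
    have "cdf (distr unif borel (qf X)) y = measure unif (qf X -` {..y})"
      unfolding cdf_def using qf_meas[OF X] by (subst measure_distr) auto
    also have "\<dots> = measure lborel ?S"
      using qf_meas[OF X] by (subst measure_unif) (auto intro: measurable_sets_borel)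
    also have "\<dots> = cdf_rv M X y"
    proof (rule emeasure_mid)
      show "0 \<le> cdf_rv M X y" using F_01 by blast
      show "{0<..cdf_rv M X y} \<subseteq> ?S"
      proof
        fix u assume u: "u \<in> {0<..cdf_rv M X y}"
        then have "u \<le> 1" using F_01[of X y] by simp
        then show "u \<in> ?S" using u qf_galois[OF X, of u y] by auto
      qed
      show "?S \<subseteq> {0..cdf_rv M X y}"
      proof
        fix u assume u: "u \<in> ?S"
        show "u \<in> {0..cdf_rv M X y}"
        proof (cases "u = 0")
          case True then show ?thesis using F_01[of X y] by simp
        next
          case False then show ?thesis using u qf_galois[OF X, of u y] by auto
        qed
      qed
      show "?S \<in> sets borel" using qf_meas[OF X] by (auto intro: measurable_sets_borel)
    qed
    also have "\<dots> = cdf (distr M borel X) y" using cdf_rv_eq[OF m] .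
    finally show "cdf (distr unif borel (qf X)) y = cdf (distr M borel X) y" .
  qed
qed

end

lemma mono_intble: "mono (f::real \<Rightarrow> real) \<Longrightarrow> f integrable_on {a..b}"
  by (rule integrable_on_mono_on) (simp add: mono_on_def monoD)

lemma const_intble: "(\<lambda>x::real. c::real) integrable_on {a..b}"
  by (rule Henstock_Kurzweil_Integration.integrable_const_ivl)

lemma int_le_right:
  fixes f :: "real \<Rightarrow> real"
  assumes "mono f" "a \<le> b"
  shows "integral {a..b} f \<le> (b - a) * f b"
proof -
  have "integral {a..b} f \<le> integral {a..b} (\<lambda>x. f b)"
    using assms by (intro integral_le mono_intble const_intble) (auto simp: monoD)
  then show ?thesis using assms(2) by simp
qed

lemma int_ge_left:
  fixes f :: "real \<Rightarrow> real"
  assumes "mono f" "a \<le> b"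
  shows "(b - a) * f a \<le> integral {a..b} f"
proof -
  have "integral {a..b} (\<lambda>x. f a) \<le> integral {a..b} f"
    using assms by (intro integral_le mono_intble const_intble) (auto simp: monoD)
  then show ?thesis using assms(2) by simp
qed

lemma int_ge_const:
  fixes f :: "real \<Rightarrow> real"
  assumes "f integrable_on {a..b}" "a \<le> b" "\<And>x. x \<in> {a..b} \<Longrightarrow> c \<le> f x"
  shows "(b - a) * c \<le> integral {a..b} f"
proof -
  have "integral {a..b} (\<lambda>x. c) \<le> integral {a..b} f"
    using assms by (intro integral_le const_intble) auto
  then show ?thesis using assms(2) by simp
qed

lemma int_le_const:
  fixes f :: "real \<Rightarrow> real"
  assumes "f integrable_on {a..b}" "a \<le> b" "\<And>x. x \<in> {a..b} \<Longrightarrow> f x \<le> c"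
  shows "integral {a..b} f \<le> (b - a) * c"
proof -
  have "integral {a..b} f \<le> integral {a..b} (\<lambda>x. c)"
    using assms by (intro integral_le const_intble) auto
  then show ?thesis using assms(2) by simp
qed

lemma set_int_bounded:
  fixes g :: "real \<Rightarrow> real"
  assumes [measurable]: "g \<in> borel_measurable borel" and b: "\<And>u. \<bar>g u\<bar> \<le> B"
  shows "(LBINT u:{a..b}. g u) = integral {a..b} g"
proof -
  have "set_integrable lborel {a..b} g"
    unfolding set_integrable_def
    by (rule integrableI_bounded_set_indicator[where B=B])
      (use b emeasure_lborel_cbox_finite[of a b, unfolded cbox_interval] in auto)
  then show ?thesis by (rule set_borel_integral_eq_integral(2))
qed

context prob_space
begin

lemma qf_intble: "X \<in> Linf M \<Longrightarrow> qf X integrable_on {a..b}"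
  using qf_mono by (intro mono_intble)

lemma VaR_int_eq:
  assumes X: "X \<in> Linf M" and a: "0 \<le> a"
  shows "(LBINT \<beta>:{a..1}. real_of_ereal (VaR M \<beta> X)) = integral {a..1} (qf X)"
proof -
  define h where "h \<beta> = (if \<beta> = 0 then 0 else qf X \<beta>)" for \<beta>
  have hm[measurable]: "h \<in> borel_measurable borel" unfolding h_def using qf_meas[OF X] by measurable
  have "(LBINT \<beta>:{a..1}. real_of_ereal (VaR M \<beta> X)) = (LBINT \<beta>:{a..1}. h \<beta>)"
  proof (rule set_lebesgue_integral_cong; (intro allI impI)?)
    fix \<beta> assume b: "\<beta> \<in> {a..1}"
    show "real_of_ereal (VaR M \<beta> X) = h \<beta>"
    proof (cases "\<beta> = 0")
      case True
      have "VaR M \<beta> X = - \<infinity>"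
        unfolding VaR_def
      proof (rule ereal_bot)
        fix B :: real
        have "\<beta> \<le> cdf_rv M X (B - 1)" using True F_01[of X] by simp
        then have "Inf {ereal x |x. \<beta> \<le> cdf_rv M X x} \<le> ereal (B - 1)" by (intro Inf_lower) auto
        then show "Inf {ereal x |x. \<beta> \<le> cdf_rv M X x} \<le> ereal B" by (rule order.trans) simp
      qed
      then show ?thesis using True unfolding h_def by simp
    next
      case False
      then have "0 < \<beta>" "\<beta> \<le> 1" using b a by auto
      then show ?thesis using qf_char[OF X] False unfolding h_def by simp
    qed
  qed simp
  also have "\<dots> = (LBINT \<beta>:{a..1}. qf X \<beta>)"
  proof (rule set_lebesgue_integral_cong_AE)
    show "AE x\<in>{a..1} in lborel. h x = qf X x"
      using AE_lborel_singleton[of 0] by eventually_elim (auto simp: h_def)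
  qed (use qf_meas[OF X] in auto)
  also have "\<dots> = integral {a..1} (qf X)"
  proof (rule set_int_bounded[where B="bnd X"])
    fix u show "\<bar>qf X u\<bar> \<le> bnd X" using qf_bounds[OF X, of u] by (simp add: abs_le_iff)
  qed (rule qf_meas[OF X])
  finally show ?thesis .
qed

lemma ES_eq:
  assumes X: "X \<in> Linf M" and a: "0 \<le> a" "a < 1"
  shows "ES M a X = ereal (integral {a..1} (qf X) / (1 - a))"
  unfolding ES_def using a VaR_int_eq[OF X a(1)] by simp

lemma ES_1: "X \<in> Linf M \<Longrightarrow> ES M 1 X = ereal (qf X 1)"
  unfolding ES_def using qf_char[of X 1] by simp

lemma I_ge:
  assumes X: "X \<in> Linf M" and a: "a \<le> 1"
  shows "(1 - a) * qf X a \<le> integral {a..1} (qf X)"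
  using int_ge_left[OF qf_mono[OF X] a] .

lemma I_le:
  assumes X: "X \<in> Linf M" and a: "a \<le> 1"
  shows "integral {a..1} (qf X) \<le> (1 - a) * qf X 1"
  using int_le_right[OF qf_mono[OF X] a] .

lemma ES_ge_qf:
  assumes X: "X \<in> Linf M" and a: "0 \<le> a" "a \<le> 1"
  shows "ereal (qf X a) \<le> ES M a X"
proof (cases "a = 1")
  case True then show ?thesis using ES_1[OF X] by simp
next
  case False
  then have a1: "a < 1" using a by simp
  have "(1 - a) * qf X a \<le> integral {a..1} (qf X)" using I_ge[OF X a(2)] .
  then have "qf X a \<le> integral {a..1} (qf X) / (1 - a)" using a1 by (simp add: field_simps)
  then show ?thesis using ES_eq[OF X a(1) a1] by simp
qed

lemma ES_mono:
  assumes X: "X \<in> Linf M" and a: "0 \<le> a" "a \<le> b" "b \<le> 1"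
  shows "ES M a X \<le> ES M b X"
proof (cases "b = 1")
  case True
  show ?thesis
  proof (cases "a = 1")
    case True then show ?thesis using \<open>b = 1\<close> by simp
  next
    case False
    then have a1: "a < 1" using a by simp
    have "integral {a..1} (qf X) \<le> (1 - a) * qf X 1" using I_le[OF X] a by simp
    then have "integral {a..1} (qf X) / (1 - a) \<le> qf X 1" using a1 by (simp add: field_simps)
    then show ?thesis using ES_eq[OF X a(1) a1] ES_1[OF X] True by simp
  qed
next
  case False
  then have b1: "b < 1" using a by simp
  have a1: "a < 1" using a b1 by simp
  let ?I = "\<lambda>c. integral {c..1} (qf X)"
  have comb: "integral {a..b} (qf X) + ?I b = ?I a"
    using Henstock_Kurzweil_Integration.integral_combine[OF a(2) _ qf_intble[OF X], of 1] b1 by simp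
  have p1: "integral {a..b} (qf X) \<le> (b - a) * qf X b" using int_le_right[OF qf_mono[OF X] a(2)] .
  have p2: "(1 - b) * qf X b \<le> ?I b" using I_ge[OF X a(3)] .
  have "?I a \<le> (b - a) * qf X b + ?I b" using comb p1 by linarith
  also have "(b - a) * qf X b \<le> (b - a) * (?I b / (1 - b))"
    using p2 b1 a by (intro mult_left_mono) (auto simp: field_simps)
  finally have "?I a \<le> (b - a) * (?I b / (1 - b)) + ?I b" by simp
  also have "\<dots> = (1 - a) * (?I b / (1 - b))" using b1 by (simp add: field_simps)
  finally have "?I a / (1 - a) \<le> ?I b / (1 - b)" using a1 by (simp add: field_simps)
  then show ?thesis using ES_eq[OF X a(1) a1] ES_eq[OF X _ b1] a by simp
qed

lemma ES_ge_level:
  assumes X: "X \<in> Linf M" and a: "0 \<le> a" "a < 1" and Fx: "cdf_rv M X x \<le> a"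
  shows "ereal x \<le> ES M a X"
proof -
  define g where "g u = max (qf X u) x" for u
  have gm: "mono g"
  proof (rule monoI)
    fix u v :: real assume uv: "u \<le> v"
    show "g u \<le> g v" unfolding g_def by (rule max.mono[OF monoD[OF qf_mono[OF X] uv] order_refl])
  qed
  have "integral {a..1} (qf X) = integral {a..1} g"
  proof (rule integral_spike[of "{a}"])
    fix u assume u: "u \<in> {a..1} - {a}"
    then have u01: "0 < u" "u \<le> 1" using a by auto
    have "\<not> qf X u \<le> x"
    proof
      assume "qf X u \<le> x"
      then have "u \<le> cdf_rv M X x" using qf_galois[OF X u01] by simp
      then show False using u Fx by auto
    qed
    then show "g u = qf X u" unfolding g_def by simp
  qed auto
  also have "(1 - a) * x \<le> integral {a..1} g"
    using a by (intro int_ge_const mono_intble[OF gm]) (auto simp: g_def)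
  finally have "x \<le> integral {a..1} (qf X) / (1 - a)" using a by (simp add: field_simps)
  then show ?thesis using ES_eq[OF X a] by simp
qed

end

lemma max0_convex:
  fixes g x y :: real
  assumes "0 \<le> g" "g \<le> 1"
  shows "max (g * x + (1 - g) * y) 0 \<le> g * max x 0 + (1 - g) * max y 0"
proof -
  have "g * x \<le> g * max x 0" using assms by (intro mult_left_mono) auto
  moreover have "(1 - g) * y \<le> (1 - g) * max y 0" using assms by (intro mult_left_mono) auto
  moreover have "0 \<le> g * max x 0" "0 \<le> (1 - g) * max y 0" using assms by auto
  ultimately show ?thesis by linarith
qed

lemma maxbound: "\<bar>x::real\<bar> \<le> B \<Longrightarrow> \<bar>max (x - t) 0\<bar> \<le> B + \<bar>t\<bar>"
  by (auto simp: abs_if max_def split: if_splits) 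
lemma minmax_aux: "(a::ereal) \<le> max b c \<Longrightarrow> min a x \<le> max (min b x) (min c x)"
proof -
  assume h: "a \<le> max b c"
  have "min a x \<le> min (max b c) x" using h by (rule min.mono) simp
  also have "min (max b c) x = max (min b x) (min c x)" by (rule min_max_distrib1)
  finally show ?thesis .
qed

context prob_space
begin

lemma Linf_lin:
  assumes X: "X \<in> Linf M" and Y: "Y \<in> Linf M"
  shows "(\<lambda>\<omega>. c * X \<omega> + d * Y \<omega>) \<in> Linf M"
proof -
  have m: "(\<lambda>\<omega>. c * X \<omega> + d * Y \<omega>) \<in> borel_measurable M"
    using Linf_meas[OF X] Linf_meas[OF Y] by measurable
  have "AE \<omega> in M. \<bar>c * X \<omega> + d * Y \<omega>\<bar> \<le> \<bar>c\<bar> * bnd X + \<bar>d\<bar> * bnd Y"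
    using conjunct2[OF bnd[OF X]] conjunct2[OF bnd[OF Y]]
  proof eventually_elim
    case (elim \<omega>)
    have "\<bar>c * X \<omega> + d * Y \<omega>\<bar> \<le> \<bar>c\<bar> * \<bar>X \<omega>\<bar> + \<bar>d\<bar> * \<bar>Y \<omega>\<bar>"
      by (metis abs_mult abs_triangle_ineq)
    also have "\<dots> \<le> \<bar>c\<bar> * bnd X + \<bar>d\<bar> * bnd Y"
      using elim by (intro add_mono mult_left_mono) auto
    finally show ?case .
  qed
  then show ?thesis unfolding Linf_def using m by blast
qed

lemma Linf_bdd_int:
  fixes f :: "real \<Rightarrow> real" and K :: real
  assumes X: "X \<in> Linf M" and f[measurable]: "f \<in> borel_measurable borel"
    and b: "\<And>x. \<bar>x\<bar> \<le> bnd X \<Longrightarrow> \<bar>f x\<bar> \<le> K"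
  shows "integrable M (\<lambda>\<omega>. f (X \<omega>))"
proof (rule integrable_const_bound[where B=K])
  show "AE \<omega> in M. norm (f (X \<omega>)) \<le> K"
    using conjunct2[OF bnd[OF X]] by eventually_elim (use b in auto)
  show "(\<lambda>\<omega>. f (X \<omega>)) \<in> borel_measurable M" using Linf_meas[OF X] by measurable
qed

lemma E_transfer:
  fixes f :: "real \<Rightarrow> real" and K :: real
  assumes X: "X \<in> Linf M" and f[measurable]: "f \<in> borel_measurable borel"
    and b: "\<And>u. \<bar>f (qf X u)\<bar> \<le> K"
  shows "expectation (\<lambda>\<omega>. f (X \<omega>)) = integral {0..1} (\<lambda>u. f (qf X u))"
proof -
  have m[measurable]: "X \<in> borel_measurable M" using Linf_meas[OF X] .
  have qm[measurable]: "qf X \<in> borel_measurable borel" using qf_meas[OF X] .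
  have "expectation (\<lambda>\<omega>. f (X \<omega>)) = integral\<^sup>L (distr M borel X) f"
    by (rule integral_distr[symmetric]) auto
  also have "\<dots> = integral\<^sup>L (distr unif borel (qf X)) f" using distr_qf[OF X] by simp
  also have "\<dots> = integral\<^sup>L unif (\<lambda>u. f (qf X u))"
    by (subst integral_distr) auto
  also have "\<dots> = (LBINT u:{0..1}. f (qf X u))" by (rule integral_unif) measurable
  also have "\<dots> = integral {0..1} (\<lambda>u. f (qf X u))"
    by (rule set_int_bounded[where B=K]) (use b in auto)
  finally show ?thesis .
qed

lemma pp_mono: "X \<in> Linf M \<Longrightarrow> mono (\<lambda>u. max (qf X u - t) 0)"
proof (rule monoI)
  fix u v :: real assume X: "X \<in> Linf M" and uv: "u \<le> v"
  have "qf X u \<le> qf X v" using monoD[OF qf_mono[OF X] uv] .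
  then show "max (qf X u - t) 0 \<le> max (qf X v - t) 0" by simp
qed

lemma RU_le:
  assumes X: "X \<in> Linf M" and a: "0 \<le> a" "a \<le> 1"
  shows "integral {a..1} (qf X) \<le> (1 - a) * t + integral {0..1} (\<lambda>u. max (qf X u - t) 0)"
proof -
  let ?p = "\<lambda>u. max (qf X u - t) 0"
  have "integral {a..1} (qf X) \<le> integral {a..1} (\<lambda>u. t + ?p u)"
    by (intro integral_le qf_intble[OF X] integrable_add const_intble mono_intble[OF pp_mono[OF X]]) auto
  also have "\<dots> = integral {a..1} (\<lambda>u. t) + integral {a..1} ?p"
    by (intro integral_add const_intble mono_intble[OF pp_mono[OF X]])
  also have "integral {a..1} (\<lambda>u. t) = (1 - a) * t" using a by simp
  also have "integral {a..1} ?p \<le> integral {0..1} ?p"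
  proof -
    have c: "integral {0..a} ?p + integral {a..1} ?p = integral {0..1} ?p"
      using Henstock_Kurzweil_Integration.integral_combine[OF a mono_intble[OF pp_mono[OF X]]] .
    have "(a - 0) * 0 \<le> integral {0..a} ?p"
      using a by (intro int_ge_const mono_intble[OF pp_mono[OF X]]) auto
    then show ?thesis using c by simp
  qed
  finally show ?thesis by simp
qed

lemma RU_eq:
  assumes X: "X \<in> Linf M" and a: "0 \<le> a" "a \<le> 1"
  shows "integral {a..1} (qf X) = (1 - a) * qf X a + integral {0..1} (\<lambda>u. max (qf X u - qf X a) 0)"
proof -
  let ?p = "\<lambda>u. max (qf X u - qf X a) 0"
  have c: "integral {0..a} ?p + integral {a..1} ?p = integral {0..1} ?p"
    using Henstock_Kurzweil_Integration.integral_combine[OF a mono_intble[OF pp_mono[OF X]]] .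
  have z: "integral {0..a} ?p = 0"
  proof -
    have "integral {0..a} ?p = integral {0..a} (\<lambda>u. 0)"
    proof (rule integral_cong)
      fix u assume "u \<in> {0..a}"
      then have "qf X u \<le> qf X a" using monoD[OF qf_mono[OF X]] by auto
      then show "?p u = 0" by simp
    qed
    then show ?thesis by simp
  qed
  have "integral {a..1} ?p = integral {a..1} (\<lambda>u. qf X u - qf X a)"
  proof (rule integral_cong)
    fix u assume "u \<in> {a..1}"
    then have "qf X a \<le> qf X u" using monoD[OF qf_mono[OF X]] by auto
    then show "?p u = qf X u - qf X a" by simp
  qed
  also have "\<dots> = integral {a..1} (qf X) - integral {a..1} (\<lambda>u. qf X a)"
    by (intro integral_diff qf_intble[OF X] const_intble)
  also have "integral {a..1} (\<lambda>u. qf X a) = (1 - a) * qf X a" using a by simp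
  finally show ?thesis using c z by simp
qed

lemma E_pp:
  assumes X: "X \<in> Linf M"
  shows "expectation (\<lambda>\<omega>. max (X \<omega> - t) 0) = integral {0..1} (\<lambda>u. max (qf X u - t) 0)"
proof (rule E_transfer[OF X, where K="bnd X + \<bar>t\<bar>"])
  fix u
  have "qf X u \<le> bnd X" "- bnd X \<le> qf X u" "0 \<le> bnd X" using qf_bounds[OF X, of u] conjunct1[OF bnd[OF X]] by auto
  then show "\<bar>max (qf X u - t) 0\<bar> \<le> bnd X + \<bar>t\<bar>" by (simp add: abs_le_iff)
qed measurable

lemma int_pp:
  assumes X: "X \<in> Linf M"
  shows "integrable M (\<lambda>\<omega>. max (X \<omega> - t) 0)"
proof (rule Linf_bdd_int[OF X, where K="bnd X + \<bar>t\<bar>"])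
  fix x :: real assume "\<bar>x\<bar> \<le> bnd X"
  then show "\<bar>max (x - t) 0\<bar> \<le> bnd X + \<bar>t\<bar>" by (rule maxbound)
qed measurable

lemma I_convex:
  assumes X: "X \<in> Linf M" and Y: "Y \<in> Linf M" and g: "0 \<le> g" "g \<le> 1" and a: "0 \<le> a" "a \<le> 1"
  defines "Z \<equiv> (\<lambda>\<omega>. g * X \<omega> + (1 - g) * Y \<omega>)"
  shows "integral {a..1} (qf Z) \<le> g * integral {a..1} (qf X) + (1 - g) * integral {a..1} (qf Y)"
proof -
  have Z: "Z \<in> Linf M" unfolding Z_def by (rule Linf_lin[OF X Y])
  define x0 where "x0 = qf X a"
  define y0 where "y0 = qf Y a"
  define t where "t = g * x0 + (1 - g) * y0"
  define IX where "IX = integral {a..1} (qf X)"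
  define IY where "IY = integral {a..1} (qf Y)"
  define IZ where "IZ = integral {a..1} (qf Z)"
  define EXv where "EXv = expectation (\<lambda>\<omega>. max (X \<omega> - x0) 0)"
  define EYv where "EYv = expectation (\<lambda>\<omega>. max (Y \<omega> - y0) 0)"
  define EZv where "EZv = expectation (\<lambda>\<omega>. max (Z \<omega> - t) 0)"
  have s1: "IZ \<le> (1 - a) * t + EZv"
    unfolding IZ_def EZv_def E_pp[OF Z] by (rule RU_le[OF Z a])
  have iX: "integrable M (\<lambda>\<omega>. g * max (X \<omega> - x0) 0)" using int_pp[OF X] by (rule integrable_mult_right)
  have iY: "integrable M (\<lambda>\<omega>. (1 - g) * max (Y \<omega> - y0) 0)" using int_pp[OF Y] by (rule integrable_mult_right)
  have "EZv \<le> expectation (\<lambda>\<omega>. g * max (X \<omega> - x0) 0 + (1 - g) * max (Y \<omega> - y0) 0)"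
    unfolding EZv_def
  proof (rule integral_mono)
    show "integrable M (\<lambda>\<omega>. max (Z \<omega> - t) 0)" by (rule int_pp[OF Z])
    show "integrable M (\<lambda>\<omega>. g * max (X \<omega> - x0) 0 + (1 - g) * max (Y \<omega> - y0) 0)"
      by (rule Bochner_Integration.integrable_add[OF iX iY])
    fix \<omega>
    have e: "Z \<omega> - t = g * (X \<omega> - x0) + (1 - g) * (Y \<omega> - y0)"
      unfolding Z_def t_def by (simp add: algebra_simps)
    show "max (Z \<omega> - t) 0 \<le> g * max (X \<omega> - x0) 0 + (1 - g) * max (Y \<omega> - y0) 0"
      unfolding e by (rule max0_convex[OF g])
  qed
  also have "expectation (\<lambda>\<omega>. g * max (X \<omega> - x0) 0 + (1 - g) * max (Y \<omega> - y0) 0)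
      = expectation (\<lambda>\<omega>. g * max (X \<omega> - x0) 0) + expectation (\<lambda>\<omega>. (1 - g) * max (Y \<omega> - y0) 0)"
    by (rule Bochner_Integration.integral_add[OF iX iY])
  also have "expectation (\<lambda>\<omega>. g * max (X \<omega> - x0) 0) = g * EXv"
    unfolding EXv_def by (rule integral_mult_right_zero)
  also have "expectation (\<lambda>\<omega>. (1 - g) * max (Y \<omega> - y0) 0) = (1 - g) * EYv"
    unfolding EYv_def by (rule integral_mult_right_zero)
  finally have s2: "EZv \<le> g * EXv + (1 - g) * EYv" .
  have s3: "EXv = IX - (1 - a) * x0"
    unfolding EXv_def IX_def E_pp[OF X] using RU_eq[OF X a] unfolding x0_def by linarith
  have s4: "EYv = IY - (1 - a) * y0"
    unfolding EYv_def IY_def E_pp[OF Y] using RU_eq[OF Y a] unfolding y0_def by linarith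
  have s5: "(1 - a) * t + (g * (IX - (1 - a) * x0) + (1 - g) * (IY - (1 - a) * y0)) = g * IX + (1 - g) * IY"
    unfolding t_def by (simp add: algebra_simps)
  have "IZ \<le> (1 - a) * t + (g * EXv + (1 - g) * EYv)" using s1 s2 by linarith
  then show ?thesis using s3 s4 s5 unfolding IZ_def[symmetric] IX_def[symmetric] IY_def[symmetric] by simp
qed

lemma AE_le_qf1:
  assumes X: "X \<in> Linf M" and m: "qf X 1 \<le> m"
  shows "AE \<omega> in M. X \<omega> \<le> m"
proof -
  have "1 \<le> cdf_rv M X m" using qf_galois[OF X, of 1 m] m by simp
  moreover have "prob {\<omega>\<in>space M. X \<omega> \<le> m} \<le> 1" by (rule prob_le_1)
  ultimately have "prob {\<omega>\<in>space M. X \<omega> \<le> m} = 1" unfolding cdf_rv_def by linarith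
  moreover have "{\<omega>\<in>space M. X \<omega> \<le> m} \<in> events" using Linf_meas[OF X] by measurable
  ultimately show ?thesis using prob_Collect_eq_1 by simp
qed

lemma qf1_le:
  assumes X: "X \<in> Linf M" and ae: "AE \<omega> in M. X \<omega> \<le> m"
  shows "qf X 1 \<le> m"
proof -
  have "{\<omega>\<in>space M. X \<omega> \<le> m} \<in> events" using Linf_meas[OF X] by measurable
  then have "prob {\<omega>\<in>space M. X \<omega> \<le> m} = 1" using prob_Collect_eq_1 ae by simp
  then have "1 \<le> cdf_rv M X m" unfolding cdf_rv_def by simp
  then show ?thesis using qf_galois[OF X, of 1 m] by simp
qed

lemma ES_qc:
  assumes X: "X \<in> Linf M" and Y: "Y \<in> Linf M" and g: "0 \<le> g" "g \<le> 1" and a: "0 \<le> a" "a \<le> 1"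
  shows "ES M a (\<lambda>\<omega>. g * X \<omega> + (1 - g) * Y \<omega>) \<le> max (ES M a X) (ES M a Y)"
proof -
  define Z where "Z = (\<lambda>\<omega>. g * X \<omega> + (1 - g) * Y \<omega>)"
  have Z: "Z \<in> Linf M" unfolding Z_def by (rule Linf_lin[OF X Y])
  show ?thesis
  proof (cases "a = 1")
    case True
    define m where "m = max (qf X 1) (qf Y 1)"
    have "AE \<omega> in M. X \<omega> \<le> m" by (rule AE_le_qf1[OF X]) (simp add: m_def)
    moreover have "AE \<omega> in M. Y \<omega> \<le> m" by (rule AE_le_qf1[OF Y]) (simp add: m_def)
    ultimately have "AE \<omega> in M. Z \<omega> \<le> m"
    proof eventually_elim
      case (elim \<omega>)
      have "g * X \<omega> \<le> g * m" using elim g by (intro mult_left_mono) auto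
      moreover have "(1 - g) * Y \<omega> \<le> (1 - g) * m" using elim g by (intro mult_left_mono) auto
      ultimately show ?case unfolding Z_def by (simp add: algebra_simps)
    qed
    then have "qf Z 1 \<le> m" by (rule qf1_le[OF Z])
    then show ?thesis using True ES_1[OF X] ES_1[OF Y] ES_1[OF Z] unfolding m_def Z_def[symmetric]
      by (simp add: max_def split: if_splits)
  next
    case False
    then have a1: "a < 1" using a by simp
    have "integral {a..1} (qf Z) \<le> g * integral {a..1} (qf X) + (1 - g) * integral {a..1} (qf Y)"
      unfolding Z_def by (rule I_convex[OF X Y g a])
    also have "\<dots> \<le> g * max (integral {a..1} (qf X)) (integral {a..1} (qf Y)) + (1 - g) * max (integral {a..1} (qf X)) (integral {a..1} (qf Y))"
      using g by (intro add_mono mult_left_mono) auto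
    also have "\<dots> = max (integral {a..1} (qf X)) (integral {a..1} (qf Y))" by (simp add: algebra_simps)
    finally have "integral {a..1} (qf Z) / (1 - a) \<le> max (integral {a..1} (qf X)) (integral {a..1} (qf Y)) / (1 - a)"
      using a1 by (intro divide_right_mono) auto
    also have "\<dots> = max (integral {a..1} (qf X) / (1 - a)) (integral {a..1} (qf Y) / (1 - a))"
      using a1 by (cases "integral {a..1} (qf X) \<le> integral {a..1} (qf Y)")
        (simp_all add: max_def divide_le_cancel)
    finally have fin: "integral {a..1} (qf Z) / (1 - a) \<le> max (integral {a..1} (qf X) / (1 - a)) (integral {a..1} (qf Y) / (1 - a))" .
    have "ereal (integral {a..1} (qf Z) / (1 - a)) \<le> max (ereal (integral {a..1} (qf X) / (1 - a))) (ereal (integral {a..1} (qf Y) / (1 - a)))"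
      using fin by (cases "integral {a..1} (qf X) / (1 - a) \<le> integral {a..1} (qf Y) / (1 - a)") (simp_all add: max_def)
    then show ?thesis using ES_eq[OF X a(1) a1] ES_eq[OF Y a(1) a1] ES_eq[OF Z a(1) a1]
      unfolding Z_def[symmetric] by simp
  qed
qed

lemma cdf_rv_distr:
  assumes "X \<in> borel_measurable M" "Y \<in> borel_measurable M" "distr M borel X = distr M borel Y"
  shows "cdf_rv M X = cdf_rv M Y"
proof
  fix x show "cdf_rv M X x = cdf_rv M Y x" using cdf_rv_eq[OF assms(1)] cdf_rv_eq[OF assms(2)] assms(3) by simp
qed

lemma VaR_distr: "cdf_rv M X = cdf_rv M Y \<Longrightarrow> VaR M a X = VaR M a Y"
  unfolding VaR_def by simp

lemma ES_distr: "cdf_rv M X = cdf_rv M Y \<Longrightarrow> ES M a X = ES M a Y"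
proof -
  assume h: "cdf_rv M X = cdf_rv M Y"
  have "\<And>b. VaR M b X = VaR M b Y" using h by (rule VaR_distr)
  then show ?thesis unfolding ES_def by simp
qed

lemma ESL_distr: "cdf_rv M X = cdf_rv M Y \<Longrightarrow> ES_Lambda M L X = ES_Lambda M L Y"
  unfolding ES_Lambda_def
proof -
  assume h: "cdf_rv M X = cdf_rv M Y"
  have "\<And>x. ES M (L x) X = ES M (L x) Y" using ES_distr[OF h] .
  then show "(SUP x. min (ES M (L x) X) (ereal x)) = (SUP x. min (ES M (L x) Y) (ereal x))" by simp
qed

lemma ESL_law_invariant: "law_invariant M (ES_Lambda M L)"
  unfolding law_invariant_def
proof (intro ballI impI)
  fix X Y assume X: "X \<in> Linf M" and Y: "Y \<in> Linf M" and d: "distr M borel X = distr M borel Y"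
  show "ES_Lambda M L X = ES_Lambda M L Y"
    by (rule ESL_distr[OF cdf_rv_distr[OF Linf_meas[OF X] Linf_meas[OF Y] d]])
qed

lemma ESL_quasi_convex:
  assumes L: "\<And>x. 0 \<le> L x \<and> L x \<le> 1"
  shows "quasi_convex M (ES_Lambda M L)"
  unfolding quasi_convex_def
proof (intro ballI)
  fix X Y g assume X: "X \<in> Linf M" and Y: "Y \<in> Linf M" and g: "g \<in> {0..1::real}"
  have g0: "0 \<le> g" and g1: "g \<le> 1" using g by auto
  let ?Z = "\<lambda>\<omega>. g * X \<omega> + (1 - g) * Y \<omega>"
  let ?SX = "SUP x. min (ES M (L x) X) (ereal x)"
  let ?SY = "SUP x. min (ES M (L x) Y) (ereal x)"
  have "min (ES M (L x) ?Z) (ereal x) \<le> max ?SX ?SY" for x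
  proof -
    have Lx: "0 \<le> L x" "L x \<le> 1" using L[of x] by auto
    have "ES M (L x) ?Z \<le> max (ES M (L x) X) (ES M (L x) Y)"
      by (rule ES_qc[OF X Y g0 g1 Lx])
    then have a: "min (ES M (L x) ?Z) (ereal x) \<le> max (min (ES M (L x) X) (ereal x)) (min (ES M (L x) Y) (ereal x))"
      by (rule minmax_aux)
    have b: "min (ES M (L x) X) (ereal x) \<le> ?SX" by (rule SUP_upper) simp
    have c: "min (ES M (L x) Y) (ereal x) \<le> ?SY" by (rule SUP_upper) simp
    show ?thesis by (rule order.trans[OF a max.mono[OF b c]])
  qed
  then have "(SUP x. min (ES M (L x) ?Z) (ereal x)) \<le> max ?SX ?SY" by (rule SUP_least)
  then show "ES_Lambda M L ?Z \<le> max (ES_Lambda M L X) (ES_Lambda M L Y)"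
    unfolding ES_Lambda_def .
qed

end

lemma ereal_le_by_reals:
  fixes a b :: ereal
  assumes h: "\<And>s. ereal s < a \<Longrightarrow> ereal s \<le> b"
  shows "a \<le> b"
proof (rule ccontr)
  assume "\<not> a \<le> b"
  then have "b < a" by simp
  then obtain z where z: "b < ereal z" "ereal z < a" using ereal_dense2 by blast
  then show False using h[OF z(2)] by simp
qed

lemma sup_min_inf_max:
  fixes f :: "real \<Rightarrow> ereal"
  assumes anti: "\<And>x y. x \<le> y \<Longrightarrow> f y \<le> f x"
  shows "(SUP x. min (f x) (ereal x)) = (INF x. max (f x) (ereal x))"
proof (rule antisym)
  have key: "min (f x) (ereal x) \<le> max (f y) (ereal y)" for x y
  proof (cases "x \<le> y")
    case True
    have "min (f x) (ereal x) \<le> ereal x" by simp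
    also have "ereal x \<le> ereal y" using True by simp
    also have "ereal y \<le> max (f y) (ereal y)" by simp
    finally show ?thesis .
  next
    case False
    have "min (f x) (ereal x) \<le> f x" by simp
    also have "f x \<le> f y" using anti[of y x] False by simp
    also have "f y \<le> max (f y) (ereal y)" by simp
    finally show ?thesis .
  qed
  show "(SUP x. min (f x) (ereal x)) \<le> (INF x. max (f x) (ereal x))"
    by (intro SUP_least INF_greatest key)
  show "(INF x. max (f x) (ereal x)) \<le> (SUP x. min (f x) (ereal x))"
  proof (rule ccontr)
    let ?s = "SUP x. min (f x) (ereal x)" and ?i = "INF x. max (f x) (ereal x)"
    assume "\<not> ?i \<le> ?s"
    then have "?s < ?i" by simp
    then obtain t where t: "?s < ereal t" "ereal t < ?i" using ereal_dense2 by blast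
    have "min (f t) (ereal t) \<le> ?s" by (rule SUP_upper) simp
    then have ft1: "f t < ereal t" using t(1) by (auto simp: min_def split: if_splits)
    have "?i \<le> max (f t) (ereal t)" by (rule INF_lower) simp
    then have "ereal t < max (f t) (ereal t)" using t(2) by simp
    then show False using ft1 by (simp add: max_def split: if_splits)
  qed
qed

context prob_space
begin

lemma ES_antimono:
  assumes X: "X \<in> Linf M" and L: "antimono L" "\<And>x. 0 \<le> L x \<and> L x \<le> 1"
  shows "x \<le> y \<Longrightarrow> ES M (L y) X \<le> ES M (L x) X"
proof -
  assume "x \<le> y"
  then have "L y \<le> L x" using L(1) by (simp add: antimono_def)
  then show ?thesis using ES_mono[OF X] L(2)[of x] L(2)[of y] by simp
qed

lemma partiii:
  assumes X: "X \<in> Linf M" and L: "antimono L" "\<And>x. 0 \<le> L x \<and> L x \<le> 1"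
  shows "ES_Lambda M L X = (INF x. max (ES M (L x) X) (ereal x))"
  unfolding ES_Lambda_def by (rule sup_min_inf_max) (rule ES_antimono[OF X L])

lemma ESL_ge_VaRL:
  assumes X: "X \<in> Linf M" and L: "\<And>x. 0 < L x \<and> L x \<le> 1"
  shows "VaR_Lambda M L X \<le> ES_Lambda M L X"
  unfolding VaR_Lambda_def
proof (rule ereal_le_by_reals)
  fix x assume x: "ereal x < Inf {ereal x |x. L x \<le> cdf_rv M X x}"
  have Fx: "cdf_rv M X x < L x"
  proof (rule ccontr)
    assume "\<not> cdf_rv M X x < L x"
    then have "ereal x \<in> {ereal x |x. L x \<le> cdf_rv M X x}" by auto
    then have "Inf {ereal x |x. L x \<le> cdf_rv M X x} \<le> ereal x" by (rule Inf_lower)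
    then show False using x by simp
  qed
  have Lx: "0 < L x" "L x \<le> 1" using L[of x] by auto
  have "x < qf X (L x)"
  proof (rule ccontr)
    assume "\<not> x < qf X (L x)"
    then have "qf X (L x) \<le> x" by simp
    then have "L x \<le> cdf_rv M X x" using qf_galois[OF X Lx, of x] by simp
    then show False using Fx by simp
  qed
  then have "ereal x \<le> ereal (qf X (L x))" by simp
  also have "\<dots> \<le> ES M (L x) X" using ES_ge_qf[OF X, of "L x"] Lx by simp
  finally have "ereal x \<le> ES M (L x) X" .
  then have "ereal x = min (ES M (L x) X) (ereal x)" by simp
  also have "\<dots> \<le> ES_Lambda M L X" unfolding ES_Lambda_def by (rule SUP_upper) simp
  finally show "ereal x \<le> ES_Lambda M L X" .
qed

lemma ESL_ge_VaRLp:
  assumes X: "X \<in> Linf M" and L: "\<And>x. 0 \<le> L x \<and> L x < 1"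
  shows "VaR_Lambda_plus M L X \<le> ES_Lambda M L X"
  unfolding VaR_Lambda_plus_def
proof (rule ereal_le_by_reals)
  fix x assume x: "ereal x < Inf {ereal x |x. L x < cdf_rv M X x}"
  have Fx: "cdf_rv M X x \<le> L x"
  proof (rule ccontr)
    assume "\<not> cdf_rv M X x \<le> L x"
    then have "ereal x \<in> {ereal x |x. L x < cdf_rv M X x}" by auto
    then have "Inf {ereal x |x. L x < cdf_rv M X x} \<le> ereal x" by (rule Inf_lower)
    then show False using x by simp
  qed
  have Lx: "0 \<le> L x" "L x < 1" using L[of x] by auto
  have "ereal x \<le> ES M (L x) X" by (rule ES_ge_level[OF X Lx Fx])
  then have "ereal x = min (ES M (L x) X) (ereal x)" by simp
  also have "\<dots> \<le> ES_Lambda M L X" unfolding ES_Lambda_def by (rule SUP_upper) simp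
  finally show "ereal x \<le> ES_Lambda M L X" .
qed

lemma VaRL_ge:
  assumes h: "\<And>y. y < s \<Longrightarrow> cdf_rv M Y y < L y"
  shows "ereal s \<le> VaR_Lambda M L Y"
  unfolding VaR_Lambda_def
proof (rule Inf_greatest)
  fix z assume "z \<in> {ereal x |x. L x \<le> cdf_rv M Y x}"
  then obtain x where x: "z = ereal x" "L x \<le> cdf_rv M Y x" by auto
  have "s \<le> x" using h[of x] x(2) by (cases "x < s") auto
  then show "ereal s \<le> z" using x(1) by simp
qed

lemma VaRLp_ge:
  assumes h: "\<And>y. y < s \<Longrightarrow> cdf_rv M Y y \<le> L y"
  shows "ereal s \<le> VaR_Lambda_plus M L Y"
  unfolding VaR_Lambda_plus_def
proof (rule Inf_greatest)
  fix z assume "z \<in> {ereal x |x. L x < cdf_rv M Y x}"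
  then obtain x where x: "z = ereal x" "L x < cdf_rv M Y x" by auto
  have "s \<le> x" using h[of x] x(2) by (cases "x < s") auto
  then show "ereal s \<le> z" using x(1) by simp
qed

lemma avg_qc:
  assumes qc: "quasi_convex M \<rho>" and li: "law_invariant M \<rho>" and X: "X \<in> Linf M"
    and Xs: "\<And>i. i < n \<Longrightarrow> Xs i \<in> Linf M \<and> distr M borel (Xs i) = distr M borel X"
    and n: "0 < n"
  shows "(\<lambda>\<omega>. (\<Sum>i<n. Xs i \<omega>) / real n) \<in> Linf M \<and> \<rho> (\<lambda>\<omega>. (\<Sum>i<n. Xs i \<omega>) / real n) \<le> \<rho> X"
  using n Xs
proof (induction n rule: nat_induct_non_zero)
  case 1
  have e: "(\<lambda>\<omega>. (\<Sum>i<1. Xs i \<omega>) / real 1) = Xs 0" by auto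
  have X0: "Xs 0 \<in> Linf M" "distr M borel (Xs 0) = distr M borel X" using 1 by auto
  have "\<rho> (Xs 0) = \<rho> X" using li X0 X unfolding law_invariant_def by blast
  then show ?case unfolding e using X0 by simp
next
  case (Suc m)
  let ?A = "\<lambda>\<omega>. (\<Sum>i<m. Xs i \<omega>) / real m"
  have IH: "?A \<in> Linf M" "\<rho> ?A \<le> \<rho> X" using Suc by auto
  have Xm: "Xs m \<in> Linf M" "distr M borel (Xs m) = distr M borel X" using Suc.prems by auto
  have rXm: "\<rho> (Xs m) = \<rho> X" using li Xm X unfolding law_invariant_def by blast
  define g where "g = real m / real (Suc m)"
  have g: "g \<in> {0..1}" unfolding g_def by auto
  have e: "(\<lambda>\<omega>. (\<Sum>i<Suc m. Xs i \<omega>) / real (Suc m)) = (\<lambda>\<omega>. g * ?A \<omega> + (1 - g) * Xs m \<omega>)"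
  proof
    fix \<omega>
    have m0: "real m \<noteq> 0" using Suc.hyps by simp
    have "g * ?A \<omega> = (\<Sum>i<m. Xs i \<omega>) / real (Suc m)" unfolding g_def using m0 by simp
    moreover have "1 - g = 1 / real (Suc m)" unfolding g_def by (simp add: field_simps)
    ultimately show "(\<Sum>i<Suc m. Xs i \<omega>) / real (Suc m) = g * ?A \<omega> + (1 - g) * Xs m \<omega>"
      by (simp add: add_divide_distrib)
  qed
  have lin: "(\<lambda>\<omega>. g * ?A \<omega> + (1 - g) * Xs m \<omega>) \<in> Linf M" by (rule Linf_lin[OF IH(1) Xm(1)])
  have q: "\<And>A B \<gamma>. A \<in> Linf M \<Longrightarrow> B \<in> Linf M \<Longrightarrow> \<gamma> \<in> {0..1} \<Longrightarrow>
      \<rho> (\<lambda>\<omega>. \<gamma> * A \<omega> + (1 - \<gamma>) * B \<omega>) \<le> max (\<rho> A) (\<rho> B)"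
    using qc unfolding quasi_convex_def by blast
  have "\<rho> (\<lambda>\<omega>. g * ?A \<omega> + (1 - g) * Xs m \<omega>) \<le> max (\<rho> ?A) (\<rho> (Xs m))"
    by (rule q[OF IH(1) Xm(1) g])
  also have "\<dots> \<le> \<rho> X" using IH(2) rXm by simp
  finally show ?case unfolding e using lin by simp
qed

end

definition phi :: "real \<Rightarrow> real \<Rightarrow> real \<Rightarrow> real" where
  "phi b d u = (if u < b then u else if u - b + d < 1 - b then u + d else u + d - (1 - b))"

lemma phi_meas[measurable]: "phi b d \<in> borel_measurable borel"
  unfolding phi_def by measurable

lemma phi_set:
  assumes b: "0 \<le> b" "b < 1" and d: "0 \<le> d" "d < 1 - b"
  shows "measure lborel ({0..1} \<inter> phi b d -` {..t}) = max 0 (min 1 t)"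
proof -
  let ?S = "{0..1} \<inter> phi b d -` {..t}"
  have phi_ge: "0 \<le> phi b d u" if "0 \<le> u" for u using that b d unfolding phi_def by auto
  consider "t < 0" | "0 \<le> t" "t < b" | "b \<le> t" "t < 1" "d \<le> t - b" | "b \<le> t" "t < 1" "t - b < d" | "1 \<le> t"
    by linarith
  then show ?thesis
  proof cases
    case 1
    have "?S = {}" using phi_ge 1 by force
    then show ?thesis using 1 by simp
  next
    case 2
    have "?S = {0..t}" using 2 b d unfolding phi_def by (auto split: if_splits)
    then show ?thesis using 2 b by simp
  next
    case 3
    have "?S = {0..t - d} \<union> {1 - d..1}" using 3 b d unfolding phi_def by (auto split: if_splits)
    moreover have "measure lborel ({0..t - d} \<union> {1 - d..1}) = measure lborel {0..t - d} + measure lborel {1 - d..1}"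
      using 3 b d by (intro measure_Union) auto
    ultimately show ?thesis using 3 b d by simp
  next
    case 4
    have "?S = {0..<b} \<union> {1 - d..1 - d + (t - b)}" using 4 b d unfolding phi_def by (auto split: if_splits)
    moreover have "measure lborel ({0..<b} \<union> {1 - d..1 - d + (t - b)}) = measure lborel {0..<b} + measure lborel {1 - d..1 - d + (t - b)}"
      using 4 b d by (intro measure_Union) auto
    ultimately show ?thesis using 4 b d by simp
  next
    case 5
    have "?S = {0..1}" using 5 b d unfolding phi_def by (auto split: if_splits)
    then show ?thesis using 5 by simp
  qed
qed

lemma phi_mp:
  assumes b: "0 \<le> b" "b < 1" and d: "0 \<le> d" "d < 1 - b"
  shows "distr unif borel (phi b d) = unif"
proof (rule cdf_unique)
  show "real_distribution (distr unif borel (phi b d))"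
    using prob_space.real_distribution_distr[OF prob_space_unif] by simp
  show "real_distribution unif" by (rule real_distribution_unif)
  show "cdf (distr unif borel (phi b d)) = cdf unif"
  proof
    fix t
    have "cdf (distr unif borel (phi b d)) t = measure unif (phi b d -` {..t})"
      unfolding cdf_def by (subst measure_distr) auto
    also have "\<dots> = measure lborel ({0..1} \<inter> phi b d -` {..t})"
      using measurable_sets_borel[OF phi_meas[of b d], of "{..t}"] by (subst measure_unif) auto
    also have "\<dots> = max 0 (min 1 t)" by (rule phi_set[OF b d])
    finally show "cdf (distr unif borel (phi b d)) t = cdf unif t" using cdf_unif by simp
  qed
qed

lemma rot_aux:
  fixes i j k n :: nat
  assumes "i \<le> j" "j < n" "(k + i) mod n = (k + j) mod n"
  shows "i = j"
proof -
  have "n dvd (k + j) - (k + i)" using assms(1,3) mod_eq_dvd_iff_nat[of "k + i" "k + j" n] by simp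
  then have "n dvd j - i" by simp
  moreover have "j - i < n" using assms by simp
  ultimately have "j - i = 0" using nat_dvd_not_less by (cases "j - i = 0") auto
  then show ?thesis using assms(1) by simp
qed

lemma rot_sum:
  fixes f :: "nat \<Rightarrow> real"
  assumes n: "0 < n"
  shows "(\<Sum>i<n. f ((k + i) mod n)) = (\<Sum>j<n. f j)"
proof -
  have inj: "inj_on (\<lambda>i. (k + i) mod n) {..<n}"
  proof (rule inj_onI)
    fix i j assume i: "i \<in> {..<n}" and j: "j \<in> {..<n}" and e: "(k + i) mod n = (k + j) mod n"
    show "i = j"
    proof (cases "i \<le> j")
      case True then show ?thesis using rot_aux[OF True _ e] j by simp
    next
      case False then show ?thesis using rot_aux[of j i n k] i e by simp
    qed
  qed
  have sub: "(\<lambda>i. (k + i) mod n) ` {..<n} \<subseteq> {..<n}" using n by auto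
  have "(\<lambda>i. (k + i) mod n) ` {..<n} = {..<n}" using endo_inj_surj[OF _ sub inj] by simp
  then have "bij_betw (\<lambda>i. (k + i) mod n) {..<n} {..<n}" using inj unfolding bij_betw_def by simp
  then show ?thesis by (rule sum.reindex_bij_betw)
qed

lemma riemann:
  fixes f :: "real \<Rightarrow> real"
  assumes f: "mono f" and h: "0 \<le> h"
  shows "integral {a..a + real m * h} f \<le> h * (\<Sum>j<m. f (a + real (Suc j) * h))"
proof (induction m)
  case 0 then show ?case by simp
next
  case (Suc m)
  have le1: "a \<le> a + real m * h" using h by simp
  have le2: "a + real m * h \<le> a + real (Suc m) * h" using h by (simp add: algebra_simps)
  have "integral {a..a + real m * h} f + integral {a + real m * h..a + real (Suc m) * h} f
      = integral {a..a + real (Suc m) * h} f"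
    by (rule Henstock_Kurzweil_Integration.integral_combine[OF le1 le2 mono_intble[OF f]])
  moreover have "integral {a + real m * h..a + real (Suc m) * h} f \<le> h * f (a + real (Suc m) * h)"
  proof -
    have "integral {a + real m * h..a + real (Suc m) * h} f
        \<le> (a + real (Suc m) * h - (a + real m * h)) * f (a + real (Suc m) * h)"
      by (rule int_le_right[OF f le2])
    also have "a + real (Suc m) * h - (a + real m * h) = h" by (simp add: algebra_simps)
    finally show ?thesis .
  qed
  moreover have "h * (\<Sum>j<Suc m. f (a + real (Suc j) * h)) = h * (\<Sum>j<m. f (a + real (Suc j) * h)) + h * f (a + real (Suc m) * h)"
    by (simp add: distrib_left)
  ultimately show ?case using Suc.IH by linarith
qed

lemma telescope:
  fixes f :: "nat \<Rightarrow> real"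
  shows "(\<Sum>j<n. f (Suc j)) = (\<Sum>j<n. f j) + f n - f 0"
  by (induction n) auto

lemma phi_lower:
  fixes b u h :: real and n i k :: nat
  assumes b: "b \<le> u" "u < 1" and n: "0 < n" and h: "h = (1 - b) / real n" and i: "i < n"
    and k: "k = nat \<lfloor>(u - b) / h\<rfloor>"
  shows "b + real ((k + i) mod n) * h \<le> phi b (real i * h) u \<and> k < n"
proof -
  have hpos: "0 < h" using h b n by simp
  have nh: "real n * h = 1 - b" using h n by simp
  define r where "r = u - b"
  have r: "0 \<le> r" "r < real n * h" using b nh unfolding r_def by auto
  have fl0: "0 \<le> \<lfloor>r / h\<rfloor>" using r hpos by simp
  have kh: "real k * h \<le> r" 
  proof -
    have "real k = of_int \<lfloor>r / h\<rfloor>" unfolding k r_def[symmetric] using fl0 by simp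
    also have "\<dots> \<le> r / h" by simp
    finally show ?thesis using hpos by (simp add: field_simps)
  qed
  have kh2: "r < real k * h + h"
  proof -
    have "r / h < of_int \<lfloor>r / h\<rfloor> + 1" by linarith
    also have "of_int \<lfloor>r / h\<rfloor> = real k" unfolding k r_def[symmetric] using fl0 by simp
    finally show ?thesis using hpos by (simp add: field_simps)
  qed
  have kn: "k < n"
  proof -
    have "real k * h < real n * h" using kh r(2) by linarith
    then show ?thesis using hpos by simp
  qed
  have ub: "\<not> u < b" using b by simp
  show ?thesis
  proof (cases "k + i < n")
    case True
    then have m: "(k + i) mod n = k + i" by simp
    have "r + real i * h < real (k + i + 1) * h" using kh2 by (simp add: algebra_simps)
    also have "\<dots> \<le> real n * h" using True hpos by (intro mult_right_mono) auto
    finally have "u - b + real i * h < 1 - b" using nh unfolding r_def by simp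
    then have "phi b (real i * h) u = u + real i * h" unfolding phi_def using ub by simp
    moreover have "b + real (k + i) * h \<le> u + real i * h" using kh unfolding r_def by (simp add: algebra_simps)
    ultimately show ?thesis using m kn by simp
  next
    case False
    then have m: "(k + i) mod n = k + i - n" using kn i by (simp add: mod_if)
    have ge: "real n \<le> real k + real i" using False by simp
    have "1 - b = real n * h" using nh by simp
    also have "\<dots> \<le> (real k + real i) * h" using ge hpos by (intro mult_right_mono) auto
    also have "\<dots> \<le> r + real i * h" using kh by (simp add: algebra_simps)
    finally have "\<not> u - b + real i * h < 1 - b" unfolding r_def by simp
    then have "phi b (real i * h) u = u + real i * h - (1 - b)" unfolding phi_def using ub by simp
    moreover have "real (k + i - n) = real k + real i - real n" using False by simp
    moreover have "b + (real k + real i - real n) * h \<le> u + real i * h - (1 - b)"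
      using kh nh unfolding r_def by (simp add: algebra_simps)
    ultimately show ?thesis using m kn by simp
  qed
qed

lemma sum_phi_lower:
  fixes Q :: "real \<Rightarrow> real"
  assumes Q: "mono Q" and b: "b \<le> u" "u < 1" and n: "0 < n" and h: "h = (1 - b) / real n"
  shows "(\<Sum>j<n. Q (b + real j * h)) \<le> (\<Sum>i<n. Q (phi b (real i * h) u))"
proof -
  define k where "k = nat \<lfloor>(u - b) / h\<rfloor>"
  have "(\<Sum>j<n. Q (b + real j * h)) = (\<Sum>i<n. Q (b + real ((k + i) mod n) * h))"
    using rot_sum[OF n, of "\<lambda>j. Q (b + real j * h)" k] by simp
  also have "\<dots> \<le> (\<Sum>i<n. Q (phi b (real i * h) u))"
  proof (rule sum_mono)
    fix i assume "i \<in> {..<n}"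
    then have "b + real ((k + i) mod n) * h \<le> phi b (real i * h) u"
      using phi_lower[OF b n h _ k_def] by simp
    then show "Q (b + real ((k + i) mod n) * h) \<le> Q (phi b (real i * h) u)" by (rule monoD[OF Q])
  qed
  finally show ?thesis .
qed

context prob_space
begin

lemma copy_distr:
  assumes X: "X \<in> Linf M" and U: "U \<in> borel_measurable M" "distr M borel U = unif"
    and b: "0 \<le> b" "b < 1" and d: "0 \<le> d" "d < 1 - b"
  shows "distr M borel (\<lambda>\<omega>. qf X (phi b d (U \<omega>))) = distr M borel X"
proof -
  have qm: "qf X \<in> borel_measurable borel" using qf_meas[OF X] .
  have c: "(\<lambda>\<omega>. qf X (phi b d (U \<omega>))) = (qf X \<circ> phi b d) \<circ> U" by (simp add: comp_def)
  have "distr M borel ((qf X \<circ> phi b d) \<circ> U) = distr (distr M borel U) borel (qf X \<circ> phi b d)"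
    using qm U(1) by (intro distr_distr[symmetric]) auto
  also have "\<dots> = distr unif borel (qf X \<circ> phi b d)" using U(2) by simp
  also have "\<dots> = distr (distr unif borel (phi b d)) borel (qf X)"
    using qm by (intro distr_distr[symmetric]) auto
  also have "\<dots> = distr unif borel (qf X)" using phi_mp[OF b d] by simp
  also have "\<dots> = distr M borel X" by (rule distr_qf[OF X])
  finally show ?thesis unfolding c .
qed

lemma copy_Linf:
  assumes X: "X \<in> Linf M" and U: "U \<in> borel_measurable M"
  shows "(\<lambda>\<omega>. qf X (phi b d (U \<omega>))) \<in> Linf M"
proof -
  have qm[measurable]: "qf X \<in> borel_measurable borel" using qf_meas[OF X] .
  have "(\<lambda>\<omega>. qf X (phi b d (U \<omega>))) \<in> borel_measurable M" using U by measurable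
  moreover have "AE \<omega> in M. \<bar>qf X (phi b d (U \<omega>))\<bar> \<le> bnd X"
  proof (intro AE_I2)
    fix \<omega> show "\<bar>qf X (phi b d (U \<omega>))\<bar> \<le> bnd X"
      using qf_bounds[OF X, of "phi b d (U \<omega>)"] by (simp add: abs_le_iff)
  qed
  ultimately show ?thesis unfolding Linf_def by blast
qed

lemma KEY:
  assumes al: "atomless M" and qc: "quasi_convex M \<rho>" and li: "law_invariant M \<rho>"
    and X: "X \<in> Linf M" and b: "0 \<le> b" "b < 1"
    and s: "s < integral {b..1} (qf X) / (1 - b)"
  shows "\<exists>Y\<in>Linf M. \<rho> Y \<le> \<rho> X \<and> (\<forall>y<s. cdf_rv M Y y \<le> b)"
proof -
  obtain U where U: "U \<in> borel_measurable M" "distr M borel U = unif"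
    "\<And>\<omega>. \<omega> \<in> space M \<Longrightarrow> 0 \<le> U \<omega> \<and> U \<omega> \<le> 1"
    using exists_uniform[OF al] by blast
  define Q where "Q = qf X"
  define B where "B = bnd X"
  define L where "L = 1 - b"
  define I where "I = integral {b..1} Q"
  define c where "c = I / L - s"
  have L: "0 < L" unfolding L_def using b by simp
  have c: "0 < c" unfolding c_def I_def Q_def L_def using s by simp
  have B: "0 \<le> B" unfolding B_def using bnd[OF X] by simp
  have Qm: "mono Q" unfolding Q_def using qf_mono[OF X] .
  have Qb: "\<And>u. - B \<le> Q u \<and> Q u \<le> B" unfolding Q_def B_def using qf_bounds[OF X] by blast
  define n where "n = nat \<lceil>2 * B / c\<rceil> + 1"
  have n: "0 < n" unfolding n_def by simp
  have nc: "2 * B / c < real n"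
  proof -
    have "2 * B / c \<le> real (nat \<lceil>2 * B / c\<rceil>)" by linarith
    then show ?thesis unfolding n_def by simp
  qed
  have nB: "2 * B / real n < c"
  proof -
    have "2 * B < c * real n" using nc c by (simp add: field_simps)
    then show ?thesis using n by (simp add: field_simps)
  qed
  define h where "h = L / real n"
  have h: "0 < h" unfolding h_def using L n by simp
  have nh: "real n * h = L" unfolding h_def using n by simp
  define Xs where "Xs i = (\<lambda>\<omega>. Q (phi b (real i * h) (U \<omega>)))" for i
  have Xs: "Xs i \<in> Linf M \<and> distr M borel (Xs i) = distr M borel X" if i: "i < n" for i
  proof
    show "Xs i \<in> Linf M" unfolding Xs_def Q_def by (rule copy_Linf[OF X U(1)])
    have d0: "0 \<le> real i * h" using h by simp
    have "real i * h < real n * h" using i h by simp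
    then have d1: "real i * h < 1 - b" using nh unfolding L_def by simp
    show "distr M borel (Xs i) = distr M borel X"
      unfolding Xs_def Q_def by (rule copy_distr[OF X U(1) U(2) b d0 d1])
  qed
  define Y where "Y = (\<lambda>\<omega>. (\<Sum>i<n. Xs i \<omega>) / real n)"
  have Y: "Y \<in> Linf M \<and> \<rho> Y \<le> \<rho> X" unfolding Y_def by (rule avg_qc[OF qc li X Xs n])
  define R where "R = (\<Sum>j<n. Q (b + real j * h))"
  have riem: "I \<le> h * (R + 2 * B)"
  proof -
    have "I = integral {b..b + real n * h} Q" unfolding I_def using nh unfolding L_def by simp
    also have "\<dots> \<le> h * (\<Sum>j<n. Q (b + real (Suc j) * h))" by (rule riemann[OF Qm]) (use h in simp)
    also have "(\<Sum>j<n. Q (b + real (Suc j) * h)) = R + Q (b + real n * h) - Q (b + real 0 * h)"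
      unfolding R_def using telescope[of "\<lambda>j. Q (b + real j * h)" n] by simp
    also have "\<dots> \<le> R + 2 * B" using Qb[of "b + real n * h"] Qb[of "b + real 0 * h"] by simp
    finally show ?thesis using h by simp
  qed
  have Ylow: "s < Y \<omega>" if \<omega>: "\<omega> \<in> space M" "b \<le> U \<omega>" "U \<omega> < 1" for \<omega>
  proof -
    have h': "h = (1 - b) / real n" unfolding h_def L_def ..
    have "R \<le> (\<Sum>i<n. Q (phi b (real i * h) (U \<omega>)))"
      unfolding R_def by (rule sum_phi_lower[OF Qm \<omega>(2,3) n h'])
    also have "\<dots> = (\<Sum>i<n. Xs i \<omega>)" unfolding Xs_def by simp
    finally have R1: "R \<le> (\<Sum>i<n. Xs i \<omega>)" .
    have "I / h - 2 * B \<le> R" using riem h by (simp add: field_simps)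
    then have "(I / h - 2 * B) / real n \<le> R / real n" using n by (intro divide_right_mono) auto
    also have "(I / h - 2 * B) / real n = I / L - 2 * B / real n"
      using n L unfolding h_def by (simp add: field_simps)
    finally have "I / L - 2 * B / real n \<le> R / real n" .
    moreover have "R / real n \<le> Y \<omega>" unfolding Y_def using R1 n by (intro divide_right_mono) auto
    moreover have "s < I / L - 2 * B / real n" using nB unfolding c_def by simp
    ultimately show ?thesis by linarith
  qed
  have Um[measurable]: "U \<in> borel_measurable M" using U(1) .
  have cdfY: "cdf_rv M Y y \<le> b" if y: "y < s" for y
  proof -
    have Ym: "Y \<in> borel_measurable M" using Linf_meas conjunct1[OF Y] by blast
    define A where "A = {..<b} \<union> {1::real}"
    have Ab: "A \<in> sets borel" unfolding A_def by simp
    have sub: "{\<omega>\<in>space M. Y \<omega> \<le> y} \<subseteq> U -` A \<inter> space M"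
    proof
      fix \<omega> assume w: "\<omega> \<in> {\<omega>\<in>space M. Y \<omega> \<le> y}"
      then have ws: "\<omega> \<in> space M" by simp
      have "\<not> (b \<le> U \<omega> \<and> U \<omega> < 1)" using Ylow[OF ws] w y by force
      then have "U \<omega> < b \<or> U \<omega> = 1" using U(3)[OF ws] by auto
      then show "\<omega> \<in> U -` A \<inter> space M" using ws unfolding A_def by auto
    qed
    have "cdf_rv M Y y \<le> prob (U -` A \<inter> space M)"
      unfolding cdf_rv_def using sub Ab by (intro finite_measure_mono) (auto intro: measurable_sets)
    also have "prob (U -` A \<inter> space M) = measure (distr M borel U) A"
      using Ab by (subst measure_distr) auto
    also have "\<dots> = measure lborel ({0..1} \<inter> A)" using U(2) Ab by (simp add: measure_unif)
    also have "{0..1} \<inter> A = {0..<b} \<union> {1..1}" unfolding A_def using b by auto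
    also have "measure lborel ({0..<b} \<union> {1..1}) = measure lborel {0..<b} + measure lborel {1..(1::real)}"
      using b by (intro measure_Union) auto
    also have "\<dots> = b" using b by simp
    finally show ?thesis .
  qed
  show ?thesis using Y cdfY by blast
qed

end

context prob_space
begin

lemma beta_exists:
  assumes X: "X \<in> Linf M" and a: "0 < a" "a < 1" and s: "s < integral {a..1} (qf X) / (1 - a)"
  shows "\<exists>b. 0 \<le> b \<and> b < a \<and> s < integral {b..1} (qf X) / (1 - b)"
proof -
  define B where "B = bnd X"
  define Ia where "Ia = integral {a..1} (qf X)"
  define c where "c = Ia - s * (1 - a)"
  have c: "0 < c" using s a unfolding c_def Ia_def by (simp add: field_simps)
  define K where "K = B + \<bar>s\<bar> + 1"
  have B: "0 \<le> B" unfolding B_def using bnd[OF X] by simp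
  have K: "0 < K" unfolding K_def using B by simp
  define d where "d = min a (c / (2 * K))"
  have d: "0 < d" "d \<le> a" "d * K < c"
  proof -
    show "0 < d" unfolding d_def using a c K by simp
    show "d \<le> a" unfolding d_def by simp
    have "d * K \<le> (c / (2 * K)) * K" unfolding d_def using K by (intro mult_right_mono) auto
    also have "\<dots> = c / 2" using K by simp
    finally show "d * K < c" using c by simp
  qed
  define b where "b = a - d"
  have b: "0 \<le> b" "b < a" unfolding b_def using d by auto
  have comb: "integral {b..a} (qf X) + Ia = integral {b..1} (qf X)"
    unfolding Ia_def using Henstock_Kurzweil_Integration.integral_combine[OF _ _ qf_intble[OF X], of b a 1] b a by simp
  have "(a - b) * qf X b \<le> integral {b..a} (qf X)" using int_ge_left[OF qf_mono[OF X]] b by simp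
  moreover have "- B \<le> qf X b" unfolding B_def using qf_bounds[OF X] by blast
  moreover have "a - b = d" unfolding b_def by simp
  ultimately have i1: "d * qf X b \<le> integral {b..a} (qf X)" and i2: "d * (- B) \<le> d * qf X b"
    using d(1) by (simp, intro mult_left_mono, simp_all)
  from i1 i2 have "- (d * B) \<le> integral {b..a} (qf X)" by simp
  then have Ib: "Ia - d * B \<le> integral {b..1} (qf X)" using comb by linarith
  have "s * (1 - b) = s * (1 - a) + s * d" unfolding b_def by (simp add: algebra_simps)
  also have "s * d \<le> \<bar>s\<bar> * d" using d by (simp add: abs_mult_pos mult_right_mono abs_ge_self)
  also have "\<bar>s\<bar> * d < c - d * B"
  proof -
    have "d * (B + \<bar>s\<bar>) < d * K" unfolding K_def using d by simp
    then show ?thesis using d(3) by (simp add: algebra_simps)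
  qed
  finally have "s * (1 - b) < Ia - d * B" unfolding c_def by simp
  then have "s * (1 - b) < integral {b..1} (qf X)" using Ib by linarith
  then have "s < integral {b..1} (qf X) / (1 - b)" using b a by (simp add: field_simps)
  then show ?thesis using b by blast
qed

lemma min_i:
  assumes al: "atomless M" and L: "antimono L" "\<And>x. 0 < L x \<and> L x \<le> 1"
    and qc: "quasi_convex M \<rho>" and li: "law_invariant M \<rho>"
    and dom: "\<And>X. X \<in> Linf M \<Longrightarrow> VaR_Lambda M L X \<le> \<rho> X"
    and X: "X \<in> Linf M"
  shows "ES_Lambda M L X \<le> \<rho> X"
  unfolding ES_Lambda_def
proof (rule SUP_least)
  fix x assume "x \<in> (UNIV :: real set)"
  show "min (ES M (L x) X) (ereal x) \<le> \<rho> X"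
  proof (rule ereal_le_by_reals)
    fix s assume s: "ereal s < min (ES M (L x) X) (ereal x)"
    have sx: "s < x" and sE: "ereal s < ES M (L x) X" using s by auto
    have Lx: "0 < L x" "L x \<le> 1" using L(2)[of x] by auto
    have Ly: "L x \<le> L y" if "y < s" for y using L(1) that sx by (simp add: antimono_def)
    show "ereal s \<le> \<rho> X"
    proof (cases "L x = 1")
      case True
      have sq: "s < qf X 1" using sE True ES_1[OF X] by simp
      have "ereal s \<le> VaR_Lambda M L X"
      proof (rule VaRL_ge)
        fix y assume y: "y < s"
        have "cdf_rv M X y < 1"
        proof (rule ccontr)
          assume "\<not> cdf_rv M X y < 1"
          then have "qf X 1 \<le> y" using qf_galois[OF X, of 1 y] by simp
          then show False using sq y by simp
        qed
        then show "cdf_rv M X y < L y" using Ly[OF y] True by simp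
      qed
      also have "\<dots> \<le> \<rho> X" by (rule dom[OF X])
      finally show ?thesis .
    next
      case False
      then have a1: "L x < 1" using Lx by simp
      have "s < integral {L x..1} (qf X) / (1 - L x)" using sE ES_eq[OF X _ a1] Lx by simp
      then obtain b where b: "0 \<le> b" "b < L x" "s < integral {b..1} (qf X) / (1 - b)"
        using beta_exists[OF X Lx(1) a1] by blast
      obtain Y where Y: "Y \<in> Linf M" "\<rho> Y \<le> \<rho> X" "\<forall>y<s. cdf_rv M Y y \<le> b"
        using KEY[OF al qc li X b(1) _ b(3)] b(2) a1 by auto
      have "ereal s \<le> VaR_Lambda M L Y"
      proof (rule VaRL_ge)
        fix y assume y: "y < s"
        show "cdf_rv M Y y < L y" using Y(3) y Ly[OF y] b(2) by force
      qed
      also have "\<dots> \<le> \<rho> Y" by (rule dom[OF Y(1)])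
      also have "\<dots> \<le> \<rho> X" by (rule Y(2))
      finally show ?thesis .
    qed
  qed
qed

lemma min_ii:
  assumes al: "atomless M" and L: "antimono L" "\<And>x. 0 \<le> L x \<and> L x < 1"
    and qc: "quasi_convex M \<rho>" and li: "law_invariant M \<rho>"
    and dom: "\<And>X. X \<in> Linf M \<Longrightarrow> VaR_Lambda_plus M L X \<le> \<rho> X"
    and X: "X \<in> Linf M"
  shows "ES_Lambda M L X \<le> \<rho> X"
  unfolding ES_Lambda_def
proof (rule SUP_least)
  fix x assume "x \<in> (UNIV :: real set)"
  show "min (ES M (L x) X) (ereal x) \<le> \<rho> X"
  proof (rule ereal_le_by_reals)
    fix s assume s: "ereal s < min (ES M (L x) X) (ereal x)"
    have sx: "s < x" and sE: "ereal s < ES M (L x) X" using s by auto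
    have Lx: "0 \<le> L x" "L x < 1" using L(2)[of x] by auto
    have Ly: "L x \<le> L y" if "y < s" for y using L(1) that sx by (simp add: antimono_def)
    have "s < integral {L x..1} (qf X) / (1 - L x)" using sE ES_eq[OF X Lx] by simp
    then obtain Y where Y: "Y \<in> Linf M" "\<rho> Y \<le> \<rho> X" "\<forall>y<s. cdf_rv M Y y \<le> L x"
      using KEY[OF al qc li X Lx] by auto
    have "ereal s \<le> VaR_Lambda_plus M L Y"
    proof (rule VaRLp_ge)
      fix y assume y: "y < s"
      show "cdf_rv M Y y \<le> L y" using Y(3) y Ly[OF y] by force
    qed
    also have "\<dots> \<le> \<rho> Y" by (rule dom[OF Y(1)])
    also have "\<dots> \<le> \<rho> X" by (rule Y(2))
    finally show "ereal s \<le> \<rho> X" .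
  qed
qed

end

theorem theorem2:
  fixes M :: "'a measure"
  assumes "prob_space M" and "atomless M"
  shows
   "(\<forall>\<Lambda>::real \<Rightarrow> real. antimono \<Lambda> \<and> (\<forall>x. 0 < \<Lambda> x \<and> \<Lambda> x \<le> 1) \<longrightarrow>
       quasi_convex M (ES_Lambda M \<Lambda>) \<and> law_invariant M (ES_Lambda M \<Lambda>) \<and>
       (\<forall>X\<in>Linf M. ES_Lambda M \<Lambda> X \<ge> VaR_Lambda M \<Lambda> X) \<and>
       (\<forall>\<rho>. quasi_convex M \<rho> \<and> law_invariant M \<rho> \<and> (\<forall>X\<in>Linf M. \<rho> X \<ge> VaR_Lambda M \<Lambda> X)
            \<longrightarrow> (\<forall>X\<in>Linf M. \<rho> X \<ge> ES_Lambda M \<Lambda> X)))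
  \<and> (\<forall>\<Lambda>::real \<Rightarrow> real. antimono \<Lambda> \<and> (\<forall>x. 0 \<le> \<Lambda> x \<and> \<Lambda> x < 1) \<longrightarrow>
       quasi_convex M (ES_Lambda M \<Lambda>) \<and> law_invariant M (ES_Lambda M \<Lambda>) \<and>
       (\<forall>X\<in>Linf M. ES_Lambda M \<Lambda> X \<ge> VaR_Lambda_plus M \<Lambda> X) \<and>
       (\<forall>\<rho>. quasi_convex M \<rho> \<and> law_invariant M \<rho> \<and> (\<forall>X\<in>Linf M. \<rho> X \<ge> VaR_Lambda_plus M \<Lambda> X)
            \<longrightarrow> (\<forall>X\<in>Linf M. \<rho> X \<ge> ES_Lambda M \<Lambda> X)))
  \<and> (\<forall>\<Lambda>::real \<Rightarrow> real. antimono \<Lambda> \<and> (\<forall>x. 0 \<le> \<Lambda> x \<and> \<Lambda> x \<le> 1) \<longrightarrow>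
       (\<forall>X\<in>Linf M. ES_Lambda M \<Lambda> X = (INF x. max (ES M (\<Lambda> x) X) (ereal x))))"
proof -
  interpret P: prob_space M by fact
  note al = assms(2)
  have part1: "quasi_convex M (ES_Lambda M L) \<and> law_invariant M (ES_Lambda M L) \<and>
       (\<forall>X\<in>Linf M. ES_Lambda M L X \<ge> VaR_Lambda M L X) \<and>
       (\<forall>\<rho>. quasi_convex M \<rho> \<and> law_invariant M \<rho> \<and> (\<forall>X\<in>Linf M. \<rho> X \<ge> VaR_Lambda M L X)
            \<longrightarrow> (\<forall>X\<in>Linf M. \<rho> X \<ge> ES_Lambda M L X))"
    if L: "antimono L" "\<forall>x. 0 < L x \<and> L x \<le> 1" for L
  proof (intro conjI allI impI ballI)
    have L01: "\<And>x. 0 \<le> L x \<and> L x \<le> 1" using L(2) by (simp add: less_imp_le)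
    show "quasi_convex M (ES_Lambda M L)" by (rule P.ESL_quasi_convex[OF L01])
    show "law_invariant M (ES_Lambda M L)" by (rule P.ESL_law_invariant)
    fix X assume X: "X \<in> Linf M"
    show "VaR_Lambda M L X \<le> ES_Lambda M L X" using P.ESL_ge_VaRL[OF X] L(2) by blast
  next
    fix \<rho> X assume h: "quasi_convex M \<rho> \<and> law_invariant M \<rho> \<and> (\<forall>X\<in>Linf M. VaR_Lambda M L X \<le> \<rho> X)"
      and X: "X \<in> Linf M"
    show "ES_Lambda M L X \<le> \<rho> X"
      using P.min_i[OF al L(1) _ _ _ _ X, of \<rho>] L(2) h by blast
  qed
  have part2: "quasi_convex M (ES_Lambda M L) \<and> law_invariant M (ES_Lambda M L) \<and>
       (\<forall>X\<in>Linf M. ES_Lambda M L X \<ge> VaR_Lambda_plus M L X) \<and>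
       (\<forall>\<rho>. quasi_convex M \<rho> \<and> law_invariant M \<rho> \<and> (\<forall>X\<in>Linf M. \<rho> X \<ge> VaR_Lambda_plus M L X)
            \<longrightarrow> (\<forall>X\<in>Linf M. \<rho> X \<ge> ES_Lambda M L X))"
    if L: "antimono L" "\<forall>x. 0 \<le> L x \<and> L x < 1" for L
  proof (intro conjI allI impI ballI)
    have L01: "\<And>x. 0 \<le> L x \<and> L x \<le> 1" using L(2) by (simp add: less_imp_le)
    show "quasi_convex M (ES_Lambda M L)" by (rule P.ESL_quasi_convex[OF L01])
    show "law_invariant M (ES_Lambda M L)" by (rule P.ESL_law_invariant)
    fix X assume X: "X \<in> Linf M"
    show "VaR_Lambda_plus M L X \<le> ES_Lambda M L X" using P.ESL_ge_VaRLp[OF X] L(2) by blast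
  next
    fix \<rho> X assume h: "quasi_convex M \<rho> \<and> law_invariant M \<rho> \<and> (\<forall>X\<in>Linf M. VaR_Lambda_plus M L X \<le> \<rho> X)"
      and X: "X \<in> Linf M"
    show "ES_Lambda M L X \<le> \<rho> X"
      using P.min_ii[OF al L(1) _ _ _ _ X, of \<rho>] L(2) h by blast
  qed
  have part3: "\<forall>X\<in>Linf M. ES_Lambda M L X = (INF x. max (ES M (L x) X) (ereal x))"
    if L: "antimono L" "\<forall>x. 0 \<le> L x \<and> L x \<le> 1" for L
    using P.partiii[OF _ L(1)] L(2) by blast
  show ?thesis using part1 part2 part3 by blast
qed

end
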